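(* Let $n=2$ and $\phi=|\cdot|_1$, so that $W_\phi=[-1,1]^2$. Let $B=\{x\in\mathbb{R}^2: |x|_2\le1\}$, $f=\chi_B$, and let $\lambda>2\sqrt2$. Put $s=1/\lambda$, $h=\sqrt{1-s^2}$ and $U=B\cap[-h,h]^2$. Then $u=\chi_U$ is a minimizer of $E(\cdot\,;f,\lambda)=\mathrm{TV}_{|\cdot|_1}(\cdot)+\lambda\|\cdot-f\|_{L^1(\mathbb{R}^2)}$ over $BV(\mathbb{R}^2)$.
   Context: For $u\in BV(\mathbb{R}^2)$, $\mathrm{TV}_{|\cdot|_1}(u)=\sup\{-\int_{\mathbb{R}^2}u\,\nabla\cdot\varphi : \varphi\in C^1_c(\mathbb{R}^2;\mathbb{R}^2),\ |\varphi(x)|_\infty\le1\ \forall x\}$; for a bounded Lipschitz set $U$ this equals $\int_{\partial U}|\nu|_1\,d\mathcal{H}^1$ with $\nu$ the outward unit normal. *)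

theory Defs
  imports "HOL-Analysis.Analysis"
begin

definition C1c_field :: "(real^2 \<Rightarrow> real^2) \<Rightarrow> bool" where
  "C1c_field \<phi> \<longleftrightarrow>
     (\<exists>D :: real^2 \<Rightarrow> ((real^2) \<Rightarrow>\<^sub>L (real^2)).
        (\<forall>x. (\<phi> has_derivative blinfun_apply (D x)) (at x)) \<and> continuous_on UNIV D) \<and>
     compact (closure {x. \<phi> x \<noteq> 0})"

definition divergence :: "(real^2 \<Rightarrow> real^2) \<Rightarrow> real^2 \<Rightarrow> real" where
  "divergence \<phi> x = (\<Sum>i\<in>UNIV. (frechet_derivative \<phi> (at x) (axis i 1)) $ i)"

text \<open>Anisotropic total variation for phi = l1 norm: dual constraint is |phi(x)|_inf <= 1.\<close>
definition TV1 :: "(real^2 \<Rightarrow> real) \<Rightarrow> ereal" where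
  "TV1 u = (SUP \<phi>\<in>{\<phi>. C1c_field \<phi> \<and> (\<forall>x i. \<bar>\<phi> x $ i\<bar> \<le> 1)}.
              ereal (- (\<integral>x. u x * divergence \<phi> x \<partial>lebesgue)))"

definition BV :: "(real^2 \<Rightarrow> real) \<Rightarrow> bool" where
  "BV u \<longleftrightarrow> integrable lebesgue u \<and> TV1 u < \<infinity>"

definition energy :: "(real^2 \<Rightarrow> real) \<Rightarrow> (real^2 \<Rightarrow> real) \<Rightarrow> real \<Rightarrow> ereal" where
  "energy u f lam = TV1 u + ereal (lam * (\<integral>x. \<bar>u x - f x\<bar> \<partial>lebesgue))"

end

theory Submission
  imports Defs "HOL-Analysis.Analysis"
begin


definition e1 :: "real \<times> real \<Rightarrow> real^2" where "e1 p = (\<chi> k. if k = 1 then snd p else fst p)"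
definition e2 :: "real \<times> real \<Rightarrow> real^2" where "e2 p = (\<chi> k. if k = 2 then snd p else fst p)"

lemma e1_simps[simp]: "e1 p $ 1 = snd p" "e1 p $ 2 = fst p"
  by (auto simp: e1_def)
lemma e2_simps[simp]: "e2 p $ 2 = snd p" "e2 p $ 1 = fst p"
  by (auto simp: e2_def)

lemma vec2_eq: "(x::real^2) = y \<longleftrightarrow> x$1 = y$1 \<and> x$2 = y$2"
  by (auto simp: vec_eq_iff forall_2)

lemma e1_cont: "continuous_on UNIV e1"
  unfolding e1_def 
  apply (rule continuous_on_vec_lambda)
  subgoal for k by (cases "k = 1") (simp_all add: continuous_on_fst continuous_on_snd)
  done
lemma e2_cont: "continuous_on UNIV e2"
  unfolding e2_def 
  apply (rule continuous_on_vec_lambda)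
  subgoal for k by (cases "k = 2") (simp_all add: continuous_on_fst continuous_on_snd)
  done

lemma e1_meas[measurable]: "e1 \<in> borel_measurable (lborel \<Otimes>\<^sub>M lborel)"
  unfolding lborel_prod measurable_lborel2 using e1_cont by (rule borel_measurable_continuous_onI)
lemma e2_meas[measurable]: "e2 \<in> borel_measurable (lborel \<Otimes>\<^sub>M lborel)"
  unfolding lborel_prod measurable_lborel2 using e2_cont by (rule borel_measurable_continuous_onI)

lemma box_cart2: "box (l::real^2) u = {x. l$1 < x$1 \<and> x$1 < u$1 \<and> l$2 < x$2 \<and> x$2 < u$2}"
  by (auto simp: mem_box_cart forall_2)

lemma Basis_cart2: "(Basis::(real^2) set) = {axis 1 1, axis 2 1}"
    by (auto simp: Basis_vec_def UNIV_2)

lemma prod_basis2: "(\<Prod>b\<in>(Basis::(real^2) set). f b) = f (axis 1 1) * f (axis 2 1)"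
proof -
  have "axis 1 (1::real) \<noteq> (axis 2 1 :: real^2)"
    by (simp add: axis_eq_axis)
  then show ?thesis unfolding Basis_cart2 by simp
qed

lemma lborel_e1: "distr (lborel \<Otimes>\<^sub>M lborel) borel e1 = lborel"
proof (rule lborel_eqI[symmetric])
  fix l u :: "real^2"
  assume le: "\<And>b. b \<in> Basis \<Longrightarrow> l \<bullet> b \<le> u \<bullet> b"
  have "e1 -` box l u \<inter> space (lborel \<Otimes>\<^sub>M lborel) = box (l$2) (u$2) \<times> box (l$1) (u$1)"
    by (auto simp: box_cart2 space_pair_measure)
  then show "emeasure (distr (lborel \<Otimes>\<^sub>M lborel) borel e1) (box l u) = (\<Prod>b\<in>Basis. (u - l) \<bullet> b)"
    using le[of "axis 1 1"] le[of "axis 2 1"] unfolding prod_basis2 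
    by (simp add: emeasure_distr lborel.emeasure_pair_measure_Times inner_axis Basis_cart2
         ennreal_mult' mult.commute)
qed simp

lemma lborel_e2: "distr (lborel \<Otimes>\<^sub>M lborel) borel e2 = lborel"
proof (rule lborel_eqI[symmetric])
  fix l u :: "real^2"
  assume le: "\<And>b. b \<in> Basis \<Longrightarrow> l \<bullet> b \<le> u \<bullet> b"
  have "e2 -` box l u \<inter> space (lborel \<Otimes>\<^sub>M lborel) = box (l$1) (u$1) \<times> box (l$2) (u$2)"
    by (auto simp: box_cart2 space_pair_measure)
  then show "emeasure (distr (lborel \<Otimes>\<^sub>M lborel) borel e2) (box l u) = (\<Prod>b\<in>Basis. (u - l) \<bullet> b)"
    using le[of "axis 1 1"] le[of "axis 2 1"] unfolding prod_basis2 
    by (simp add: emeasure_distr lborel.emeasure_pair_measure_Times inner_axis Basis_cart2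
         ennreal_mult' mult.commute)
qed simp


lemma slice_integral:
  fixes e :: "real \<times> real \<Rightarrow> real^2" and g g' :: "real^2 \<Rightarrow> real" and R :: "(real^2) set"
  assumes iso: "distr (lborel \<Otimes>\<^sub>M lborel) borel e = lborel"
  and emeas: "e \<in> borel_measurable (lborel \<Otimes>\<^sub>M lborel)"
  and econt: "continuous_on UNIV e"
  and deriv: "\<And>y t. ((\<lambda>t. g (e (y,t))) has_real_derivative g' (e (y,t))) (at t)"
  and g'cont: "continuous_on UNIV g'"
  and R: "compact R"
  and slice: "\<And>y t. e (y,t) \<in> R \<longleftrightarrow> \<bar>y\<bar> \<le> H \<and> \<bar>t\<bar> \<le> w y"
  and wpos: "\<And>y. \<bar>y\<bar> \<le> H \<Longrightarrow> 0 \<le> w y"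
  shows "(\<integral>x. indicator R x * g' x \<partial>lebesgue) = (\<integral>y. indicator {-H..H} y * (g (e (y, w y)) - g (e (y, - w y))) \<partial>lborel)"
proof -
  let ?f = "\<lambda>x. indicator R x * g' x"
  have fmeas: "?f \<in> borel_measurable borel"
    using R g'cont by (intro borel_measurable_times borel_measurable_indicator borel_measurable_continuous_onI) 
       (auto intro: borel_compact)
  have intf: "integrable lborel ?f"
    using borel_integrable_compact[OF R, of g'] g'cont by (simp add: continuous_on_subset)
  have "(\<integral>x. ?f x \<partial>lebesgue) = (\<integral>x. ?f x \<partial>lborel)"
    using fmeas by (simp add: integral_completion)
  also have "\<dots> = (\<integral>x. ?f x \<partial>(distr (lborel \<Otimes>\<^sub>M lborel) borel e))"
    using iso by simp
  also have "\<dots> = (\<integral>p. ?f (e p) \<partial>(lborel \<Otimes>\<^sub>M lborel))"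
    using fmeas emeas by (intro integral_distr) auto
  also have "\<dots> = (\<integral>y. (\<integral>t. ?f (e (y,t)) \<partial>lborel) \<partial>lborel)"
  proof -
    have "integrable (distr (lborel \<Otimes>\<^sub>M lborel) borel e) ?f"
      using intf iso by simp
    then have "integrable (lborel \<Otimes>\<^sub>M lborel) (\<lambda>p. ?f (e p))"
      using fmeas emeas by (subst (asm) integrable_distr_eq) auto
    then show ?thesis
      by (rule lborel_pair.integral_fst'[symmetric])
  qed
  moreover have inner: "(\<integral>t. ?f (e (y,t)) \<partial>lborel) = indicator {-H..H} y * (g (e (y, w y)) - g (e (y, - w y)))" for y
  proof -
    show ?thesis
    proof (cases "\<bar>y\<bar> \<le> H")
      case True
      have "(\<integral>t. ?f (e (y,t)) \<partial>lborel) = (\<integral>t. g' (e (y,t)) * indicator {- w y .. w y} t \<partial>lborel)"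
        apply (rule Bochner_Integration.integral_cong) using True by (auto simp: slice indicator_def abs_le_iff)
      also have "\<dots> = g (e (y, w y)) - g (e (y, - w y))"
      proof (rule integral_FTC_Icc_real)
        show "- w y \<le> w y" using wpos[OF True] by simp
        show "DERIV (\<lambda>t. g (e (y,t))) t :> g' (e (y,t))" for t by (rule deriv)
        show "isCont (\<lambda>t. g' (e (y,t))) t" for t
        proof -
          have "continuous_on UNIV (\<lambda>t. g' (e (y,t)))"
            by (intro continuous_on_compose2[OF g'cont] continuous_on_compose2[OF econt]) 
               (auto intro!: continuous_intros)
          then show ?thesis by (simp add: continuous_on_eq_continuous_at)
        qed
      qed
      finally show ?thesis using True by (simp add: indicator_def abs_le_iff)
    next
      case False
      then have "\<And>t. indicator R (e (y,t)) = (0::real)" by (simp add: slice indicator_def)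
      with False show ?thesis by (auto simp add: indicator_def abs_le_iff)
    qed
  qed
  ultimately show ?thesis by (simp add: inner)
qed


lemma e1_line: "e1 (y,t) = e1 (y,0) + t *\<^sub>R axis 1 1"
  by (simp add: vec2_eq axis_def)
lemma e2_line: "e2 (y,t) = e2 (y,0) + t *\<^sub>R axis 2 1"
  by (simp add: vec2_eq axis_def)

lemma line_deriv:
  fixes \<phi> :: "real^2 \<Rightarrow> real^2"
  assumes d: "\<And>x. (\<phi> has_derivative blinfun_apply (D x)) (at x)"
  and line: "\<And>t. e (y,t) = e (y,0) + t *\<^sub>R axis i 1"
  shows "((\<lambda>t. \<phi> (e (y,t)) $ k) has_real_derivative (blinfun_apply (D (e (y,t))) (axis i 1)) $ k) (at t)"
proof -
  have l: "(\<lambda>t. e (y,t)) = (\<lambda>t. e (y,0) + t *\<^sub>R axis i 1)"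
    by (rule ext) (rule line)
  have d1: "((\<lambda>t. e (y,t)) has_derivative (\<lambda>v. v *\<^sub>R axis i 1)) (at t)"
    unfolding l by (auto intro!: derivative_eq_intros)
  have d2: "((\<lambda>t. \<phi> (e (y,t))) has_derivative (\<lambda>v. blinfun_apply (D (e (y,t))) (v *\<^sub>R axis i 1))) (at t)"
    using has_derivative_compose[OF d1 d[of "e (y,t)"]] by (simp add: o_def)
  have d3: "((\<lambda>t. \<phi> (e (y,t)) $ k) has_derivative (\<lambda>v. (blinfun_apply (D (e (y,t))) (v *\<^sub>R axis i 1)) $ k)) (at t)"
    using bounded_linear.has_derivative[OF bounded_linear_vec_nth d2] .
  show ?thesis
    unfolding has_field_derivative_def
    using d3 by (simp add: blinfun.scaleR_right mult.commute[of _ "blinfun_apply (D (e (y, t))) (axis i 1) $ k"])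
qed

lemma divergence_D:
  fixes \<phi> :: "real^2 \<Rightarrow> real^2"
  assumes d: "\<And>x. (\<phi> has_derivative blinfun_apply (D x)) (at x)"
  shows "divergence \<phi> x = (blinfun_apply (D x) (axis 1 1)) $ 1 + (blinfun_apply (D x) (axis 2 1)) $ 2"
  unfolding divergence_def sum_2 frechet_derivative_at[OF d, symmetric] ..

lemma D_comp_cont:
  fixes D :: "real^2 \<Rightarrow> ((real^2) \<Rightarrow>\<^sub>L (real^2))"
  assumes "continuous_on UNIV D"
  shows "continuous_on UNIV (\<lambda>x. (blinfun_apply (D x) v) $ k)"
proof -
  have "continuous_on UNIV (\<lambda>x. blinfun_apply (D x) v)"
    by (rule blinfun.continuous_on[OF assms continuous_on_const])
  then show ?thesis by (rule continuous_on_component)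
qed


definition Bset :: "(real^2) set" where "Bset = {x. norm x \<le> 1}"
definition Uset :: "real \<Rightarrow> (real^2) set" where "Uset h = Bset \<inter> {x. \<forall>i. \<bar>x$i\<bar> \<le> h}"
definition wU :: "real \<Rightarrow> real \<Rightarrow> real" where "wU h y = min h (sqrt (1 - y\<^sup>2))"

lemma norm2: "norm (x::real^2) = sqrt ((x$1)\<^sup>2 + (x$2)\<^sup>2)"
  by (simp add: norm_vec_def L2_set_def sum_2)

lemma sqrt_le_iff_aux: "0 \<le> a \<Longrightarrow> \<bar>t\<bar> \<le> sqrt a \<longleftrightarrow> t\<^sup>2 \<le> a"
  by (metis abs_ge_zero real_sqrt_abs real_sqrt_le_iff real_sqrt_pow2_iff)

lemma U_slice:
  assumes h: "0 \<le> h" "h \<le> 1" and x: "x$i = t" "x$j = y" and ij: "i \<noteq> j"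
  shows "x \<in> Uset h \<longleftrightarrow> \<bar>y\<bar> \<le> h \<and> \<bar>t\<bar> \<le> wU h y"
proof -
  have n: "x \<in> Bset \<longleftrightarrow> t\<^sup>2 + y\<^sup>2 \<le> 1"
  proof -
    have "(x$1)\<^sup>2 + (x$2)\<^sup>2 = t\<^sup>2 + y\<^sup>2"
    proof -
      have "i = 1 \<and> j = 2 \<or> i = 2 \<and> j = 1" using ij exhaust_2[of i] exhaust_2[of j] by metis
      then show ?thesis using x by (auto simp: add.commute)
    qed
    then show ?thesis by (simp add: Bset_def norm2)
  qed
  have a: "(\<forall>k. \<bar>x$k\<bar> \<le> h) \<longleftrightarrow> \<bar>t\<bar> \<le> h \<and> \<bar>y\<bar> \<le> h"
  proof -
    have "i = 1 \<and> j = 2 \<or> i = 2 \<and> j = 1" using ij exhaust_2[of i] exhaust_2[of j] by metis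
    then show ?thesis using x by (auto simp: forall_2)
  qed
  show ?thesis
  proof
    assume "x \<in> Uset h"
    then have "t\<^sup>2 + y\<^sup>2 \<le> 1" "\<bar>t\<bar> \<le> h" "\<bar>y\<bar> \<le> h" using n a by (auto simp: Uset_def)
    then show "\<bar>y\<bar> \<le> h \<and> \<bar>t\<bar> \<le> wU h y"
      using sqrt_le_iff_aux[of "1 - y\<^sup>2" t] zero_le_power2[of t] by (auto simp: wU_def)
  next
    assume "\<bar>y\<bar> \<le> h \<and> \<bar>t\<bar> \<le> wU h y"
    moreover have "0 \<le> 1 - y\<^sup>2" using calculation h abs_square_le_1[of y] by simp
    ultimately have "t\<^sup>2 + y\<^sup>2 \<le> 1" "\<bar>t\<bar> \<le> h" "\<bar>y\<bar> \<le> h"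
      by (auto simp: wU_def sqrt_le_iff_aux)
    then show "x \<in> Uset h" using n a by (auto simp: Uset_def)
  qed
qed

lemma U_slice1: "0 \<le> h \<Longrightarrow> h \<le> 1 \<Longrightarrow> e1 (y,t) \<in> Uset h \<longleftrightarrow> \<bar>y\<bar> \<le> h \<and> \<bar>t\<bar> \<le> wU h y"
  by (rule U_slice[of h "e1 (y,t)" 1 t 2 y]) auto
lemma U_slice2: "0 \<le> h \<Longrightarrow> h \<le> 1 \<Longrightarrow> e2 (y,t) \<in> Uset h \<longleftrightarrow> \<bar>y\<bar> \<le> h \<and> \<bar>t\<bar> \<le> wU h y"
  by (rule U_slice[of h "e2 (y,t)" 2 t 1 y]) auto

lemma wU_nonneg: "0 \<le> h \<Longrightarrow> h \<le> 1 \<Longrightarrow> \<bar>y\<bar> \<le> h \<Longrightarrow> 0 \<le> wU h y"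
  using abs_square_le_1[of y] by (simp add: wU_def)

lemma compact_B: "compact Bset"
  unfolding Bset_def using compact_cball[of "0::real^2" 1] by (simp add: cball_def dist_norm)

lemma compact_U: "compact (Uset h)"
proof -
  have "closed {x::real^2. \<forall>i. \<bar>x$i\<bar> \<le> h}"
    by (intro closed_Collect_all closed_Collect_le continuous_intros)
  then show ?thesis unfolding Uset_def using compact_B by (rule compact_Int_closed[rotated])
qed

lemma integral_ind_const: "a \<le> b \<Longrightarrow> (\<integral>y. indicator {a..b} y * c \<partial>lborel) = (b - a) * (c::real)"
  by simp


lemma int_compact_lebesgue:
  fixes g :: "real^2 \<Rightarrow> real"
  assumes "compact R" "continuous_on UNIV g"
  shows "integrable lebesgue (\<lambda>x. indicator R x * g x)"
proof -
  have m: "(\<lambda>x. indicator R x * g x) \<in> borel_measurable borel"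
    using assms by (intro borel_measurable_times borel_measurable_indicator borel_measurable_continuous_onI) 
       (auto intro: borel_compact)
  have "integrable lborel (\<lambda>x. indicator R x * g x)"
    using borel_integrable_compact[OF assms(1), of g] assms(2) by (simp add: continuous_on_subset)
  then show ?thesis using m by (simp add: integrable_completion)
qed

lemma slice_bound:
  fixes F G :: "real \<Rightarrow> real"
  assumes "\<And>y. \<bar>F y\<bar> \<le> 1" "\<And>y. \<bar>G y\<bar> \<le> 1" "0 \<le> H"
  shows "- (\<integral>y. indicator {-H..H} y * (F y - G y) \<partial>lborel) \<le> 4 * H"
proof -
  have "- (\<integral>y. indicator {-H..H} y * (F y - G y) \<partial>lborel) = (\<integral>y. indicator {-H..H} y * (G y - F y) \<partial>lborel)"
    by (subst integral_minus[symmetric]) (simp add: algebra_simps)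
  also have "\<dots> \<le> (\<integral>y. indicator {-H..H} y * 2 \<partial>lborel)"
  proof (rule integral_mono')
    show "integrable lborel (\<lambda>y. indicator {-H..H} y * (2::real))"
      by (intro integrable_mult_left integrable_real_indicator) (auto simp: emeasure_lborel_Icc_eq)
    show "indicator {- H..H} y * (G y - F y) \<le> indicator {- H..H} y * 2" for y
      using assms(1,2)[of y] by (auto simp: indicator_def abs_le_iff)
  qed (auto simp: indicator_def)
  also have "\<dots> = 4 * H" using assms(3) by simp
  finally show ?thesis .
qed

lemma C1c_D:
  assumes "C1c_field \<phi>"
  obtains D where "\<And>x. (\<phi> has_derivative blinfun_apply (D x)) (at x)" "continuous_on UNIV D"
proof -
  from assms obtain D where D1: "\<forall>x. (\<phi> has_derivative blinfun_apply (D x)) (at x)" and D2: "continuous_on UNIV D"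
    unfolding C1c_field_def by blast
  show thesis by (rule that[of D]) (use D1 D2 in auto)
qed

lemma TV_U_test:
  assumes h: "0 \<le> h" "h \<le> 1" and adm: "C1c_field \<phi>" "\<And>x i. \<bar>\<phi> x $ i\<bar> \<le> 1"
  shows "- (\<integral>x. indicator (Uset h) x * divergence \<phi> x \<partial>lebesgue) \<le> 8 * h"
proof -
  obtain D where d: "\<And>x. (\<phi> has_derivative blinfun_apply (D x)) (at x)" and Dc: "continuous_on UNIV D"
    using adm(1) unfolding C1c_field_def by metis
  let ?g1 = "\<lambda>x. (blinfun_apply (D x) (axis 1 1)) $ 1"
  let ?g2 = "\<lambda>x. (blinfun_apply (D x) (axis 2 1)) $ 2"
  have c1: "continuous_on UNIV ?g1" and c2: "continuous_on UNIV ?g2"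
    using Dc by (auto intro: D_comp_cont)
  have "(\<integral>x. indicator (Uset h) x * divergence \<phi> x \<partial>lebesgue)
     = (\<integral>x. indicator (Uset h) x * ?g1 x + indicator (Uset h) x * ?g2 x \<partial>lebesgue)"
    by (simp add: divergence_D[OF d] algebra_simps)
  also have "\<dots> = (\<integral>x. indicator (Uset h) x * ?g1 x \<partial>lebesgue) + (\<integral>x. indicator (Uset h) x * ?g2 x \<partial>lebesgue)"
    by (intro Bochner_Integration.integral_add int_compact_lebesgue compact_U c1 c2)
  also have "(\<integral>x. indicator (Uset h) x * ?g1 x \<partial>lebesgue)
     = (\<integral>y. indicator {-h..h} y * (\<phi> (e1 (y, wU h y)) $ 1 - \<phi> (e1 (y, - wU h y)) $ 1) \<partial>lborel)"
    by (rule slice_integral[OF lborel_e1 e1_meas e1_cont line_deriv[OF d e1_line] c1 compact_U U_slice1[OF h] wU_nonneg[OF h]])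
  also have "(\<integral>x. indicator (Uset h) x * ?g2 x \<partial>lebesgue)
     = (\<integral>y. indicator {-h..h} y * (\<phi> (e2 (y, wU h y)) $ 2 - \<phi> (e2 (y, - wU h y)) $ 2) \<partial>lborel)"
    by (rule slice_integral[OF lborel_e2 e2_meas e2_cont line_deriv[OF d e2_line] c2 compact_U U_slice2[OF h] wU_nonneg[OF h]])
  finally show ?thesis
    using slice_bound[of "\<lambda>y. \<phi> (e1 (y, wU h y)) $ 1" "\<lambda>y. \<phi> (e1 (y, - wU h y)) $ 1" h]
          slice_bound[of "\<lambda>y. \<phi> (e2 (y, wU h y)) $ 2" "\<lambda>y. \<phi> (e2 (y, - wU h y)) $ 2" h]
          adm(2) h by fastforce
qed


lemma DERIV_quad_bound:
  fixes f :: "real \<Rightarrow> real"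
  assumes b: "\<And>h. \<bar>f (x+h) - f x - D*h\<bar> \<le> C*h\<^sup>2"
  shows "DERIV f x :> D"
proof -
  have "((\<lambda>h. (f (x+h) - f x)/h - D) \<longlongrightarrow> 0) (at 0)"
  proof (rule Lim_null_comparison)
    show "\<forall>\<^sub>F h in at 0. norm ((f (x+h) - f x)/h - D) \<le> C * \<bar>h\<bar>"
      unfolding eventually_at_filter
    proof (rule always_eventually, intro allI impI)
      fix h :: real assume "h \<noteq> 0"
      then have "(f (x+h) - f x)/h - D = (f (x+h) - f x - D*h)/h" by (simp add: field_simps)
      then have "norm ((f (x+h) - f x)/h - D) = \<bar>f (x+h) - f x - D*h\<bar> / \<bar>h\<bar>" by (simp add: abs_divide)
      also have "\<dots> \<le> C*h\<^sup>2 / \<bar>h\<bar>" using b[of h] by (simp add: divide_right_mono)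
      also have "\<dots> = C * \<bar>h\<bar>"
      proof -
        show ?thesis using \<open>h \<noteq> 0\<close> by (cases "h > 0") (auto simp: field_simps power2_eq_square)
      qed
      finally show "norm ((f (x+h) - f x)/h - D) \<le> C * \<bar>h\<bar>" .
    qed
    show "((\<lambda>h. C * \<bar>h\<bar>) \<longlongrightarrow> 0) (at 0)"
      by (rule tendsto_eq_intros, rule tendsto_const) (auto intro!: tendsto_eq_intros)
  qed
  then show ?thesis unfolding DERIV_def LIM_zero_iff .
qed

definition q :: "real \<Rightarrow> real" where "q u = (max 0 u)\<^sup>2"
definition q' :: "real \<Rightarrow> real" where "q' u = 2 * max 0 u"

lemma q_deriv: "DERIV q u :> q' u"
proof (rule DERIV_quad_bound[where C=1])
  fix h :: real
  show "\<bar>q (u+h) - q u - q' u * h\<bar> \<le> 1 * h\<^sup>2"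
  proof (cases "u \<le> 0"; cases "u + h \<le> 0")
    assume a: "u \<le> 0" "u + h \<le> 0"
    then show ?thesis by (simp add: q_def q'_def max_def)
  next
    assume a: "u \<le> 0" "\<not> u + h \<le> 0"
    then have "(u+h)\<^sup>2 \<le> h\<^sup>2" by (intro power_mono) auto
    then show ?thesis using a by (simp add: q_def q'_def max_def)
  next
    assume a: "\<not> u \<le> 0" "u + h \<le> 0"
    have e: "q (u+h) - q u - q' u * h = -(u*u) - 2*u*h" using a by (simp add: q_def q'_def max_def power2_eq_square)
    have "0 \<le> (u+h)*(u+h)" by simp
    moreover have "0 \<le> - u * (u + 2*h)" using a by (intro mult_nonpos_nonpos) auto
    ultimately show ?thesis unfolding e power2_eq_square by (smt (verit) distrib_left distrib_right mult.commute)
  next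
    assume a: "\<not> u \<le> 0" "\<not> u + h \<le> 0"
    have e: "q (u+h) - q u - q' u * h = h*h" using a by (simp add: q_def q'_def max_def power2_eq_square algebra_simps)
    then show ?thesis by (simp add: power2_eq_square)
  qed
qed

lemma q'_cont: "continuous_on UNIV q'"
  unfolding q'_def by (intro continuous_intros)


lemma q_neg: "u \<le> 0 \<Longrightarrow> q u = 0" by (simp add: q_def)
lemma q_pos: "0 \<le> u \<Longrightarrow> q u = u\<^sup>2" by (simp add: q_def)
lemma q'_neg: "u \<le> 0 \<Longrightarrow> q' u = 0" by (simp add: q'_def)
lemma q'_pos: "0 \<le> u \<Longrightarrow> q' u = 2*u" by (simp add: q'_def)

definition Sm :: "real \<Rightarrow> real" where "Sm u = 2 * q u - 4 * q (u - 1/2) + 2 * q (u - 1)"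
definition Sm' :: "real \<Rightarrow> real" where "Sm' u = 2 * q' u - 4 * q' (u - 1/2) + 2 * q' (u - 1)"

lemma Sm_deriv: "DERIV Sm u :> Sm' u"
  unfolding Sm_def Sm'_def
  by (auto intro!: derivative_eq_intros DERIV_chain2[OF q_deriv])

lemma Sm'_cont: "continuous_on UNIV Sm'"
  unfolding Sm'_def using q'_cont
  by (intro continuous_intros continuous_on_compose2[OF q'_cont]) auto

lemma Sm_cases:
  "u \<le> 0 \<Longrightarrow> Sm u = 0 \<and> Sm' u = 0"
  "0 \<le> u \<Longrightarrow> u \<le> 1/2 \<Longrightarrow> Sm u = 2*u\<^sup>2 \<and> Sm' u = 4*u"
  "1/2 \<le> u \<Longrightarrow> u \<le> 1 \<Longrightarrow> Sm u = 1 - 2*(1-u)\<^sup>2 \<and> Sm' u = 4 - 4*u"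
  "1 \<le> u \<Longrightarrow> Sm u = 1 \<and> Sm' u = 0"
  by (auto simp: Sm_def Sm'_def q_neg q_pos q'_neg q'_pos power2_eq_square algebra_simps)

lemma Sm_bounds: "0 \<le> Sm u" "Sm u \<le> 1" "0 \<le> Sm' u" "Sm' u \<le> 2"
proof -
  have "(0 \<le> Sm u \<and> Sm u \<le> 1) \<and> (0 \<le> Sm' u \<and> Sm' u \<le> 2)"
  proof (cases "u \<le> 0")
    case True then show ?thesis using Sm_cases(1) by simp
  next
    case F1: False
    show ?thesis
    proof (cases "u \<le> 1/2")
      case True
      have "u\<^sup>2 \<le> (1/2)\<^sup>2" using F1 True by (intro power_mono) auto
      then show ?thesis using Sm_cases(2)[of u] F1 True by (simp add: power2_eq_square)
    next
      case F2: False
      show ?thesis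
      proof (cases "u \<le> 1")
        case True
        have "(1-u)\<^sup>2 \<le> (1/2)\<^sup>2" using F2 True by (intro power_mono) auto
        then show ?thesis using Sm_cases(3)[of u] F2 True by (simp add: power2_eq_square)
      next
        case False then show ?thesis using Sm_cases(4)[of u] by simp
      qed
    qed
  qed
  then show "0 \<le> Sm u" "Sm u \<le> 1" "0 \<le> Sm' u" "Sm' u \<le> 2" by auto
qed


definition cc :: "real \<Rightarrow> real \<Rightarrow> real" where
  "cc d t = t - (q (t-1+d) - q (t-1-d))/(4*d) + (q (-t-1+d) - q (-t-1-d))/(4*d)"
definition cc' :: "real \<Rightarrow> real \<Rightarrow> real" where
  "cc' d t = 1 - (q' (t-1+d) - q' (t-1-d))/(4*d) - (q' (-t-1+d) - q' (-t-1-d))/(4*d)"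

lemma cc_deriv: assumes "d \<noteq> 0" shows "DERIV (cc d) t :> cc' d t"
  unfolding cc_def cc'_def using assms
  by (auto intro!: derivative_eq_intros DERIV_chain2[OF q_deriv] simp: field_simps)

lemma cc'_cont: "d \<noteq> 0 \<Longrightarrow> continuous_on UNIV (cc' d)"
  unfolding cc'_def
  by (intro continuous_intros continuous_on_compose2[OF q'_cont]) auto

lemma cc_odd: "cc d (-t) = - cc d t" "cc' d (-t) = cc' d t"
  by (simp_all add: cc_def cc'_def algebra_simps)


lemma cc_pos_cases:
  assumes d: "0 < d" "d \<le> 1/2" and t: "0 \<le> t"
  shows "t \<le> 1-d \<Longrightarrow> cc d t = t \<and> cc' d t = 1"
    and "1-d \<le> t \<Longrightarrow> t \<le> 1+d \<Longrightarrow> cc d t = t - (t-1+d)\<^sup>2/(4*d) \<and> cc' d t = 1 - (t-1+d)/(2*d)"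
    and "1+d \<le> t \<Longrightarrow> cc d t = 1 \<and> cc' d t = 0"
proof -
  have n: "q (-t-1+d) = 0" "q (-t-1-d) = 0" "q' (-t-1+d) = 0" "q' (-t-1-d) = 0"
    using d t by (auto intro!: q_neg q'_neg)
  show "t \<le> 1-d \<Longrightarrow> cc d t = t \<and> cc' d t = 1"
    using d by (simp add: cc_def cc'_def n q_neg q'_neg)
  have h2: "(2 * t - 2 + 2 * d) / (4 * d) = (t - 1 + d) / (2 * d)" using d by (simp add: field_simps)
  show "1-d \<le> t \<Longrightarrow> t \<le> 1+d \<Longrightarrow> cc d t = t - (t-1+d)\<^sup>2/(4*d) \<and> cc' d t = 1 - (t-1+d)/(2*d)"
    using d by (simp add: cc_def cc'_def n q_neg q'_neg q_pos q'_pos h2)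
  assume a3: "1+d \<le> t"
  have e1: "(t-1+d)\<^sup>2 - (t-1-d)\<^sup>2 = 4*d*(t-1)" by (simp add: power2_eq_square algebra_simps)
  have e2: "2*(t-1+d) - 2*(t-1-d) = 4*d" by simp
  have "cc d t = t - ((t-1+d)\<^sup>2 - (t-1-d)\<^sup>2)/(4*d)"
    using d a3 by (simp add: cc_def n q_pos)
  also have "\<dots> = 1" using d by (simp only: e1) simp
  finally have c1: "cc d t = 1" .
  have "cc' d t = 1 - (2*(t-1+d) - 2*(t-1-d))/(4*d)"
    using d a3 by (simp add: cc'_def n q'_pos)
  also have "\<dots> = 0" using d by (simp only: e2) simp
  finally show "cc d t = 1 \<and> cc' d t = 0" using c1 by simp
qed

lemma cc_pos_bounds:
  assumes d: "0 < d" "d \<le> 1/2" and t: "0 \<le> t"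
  shows "0 \<le> cc d t \<and> cc d t \<le> 1 \<and> 0 \<le> cc' d t \<and> cc' d t \<le> 1"
proof (cases "t \<le> 1-d")
  case True then show ?thesis using cc_pos_cases(1)[OF d t] d t by simp
next
  case F1: False
  show ?thesis
  proof (cases "t \<le> 1+d")
    case True
    let ?u = "t-1+d"
    have u: "0 \<le> ?u" "?u \<le> 2*d" using F1 True by auto
    have "?u\<^sup>2 \<le> ?u * (2*d)" using u by (simp add: power2_eq_square mult_left_mono)
    then have b1: "?u\<^sup>2/(4*d) \<le> ?u/2" using d by (simp add: field_simps)
    have "?u\<^sup>2 - 4*d*(t-1) = (?u - 2*d)\<^sup>2" by (simp add: power2_eq_square algebra_simps)
    then have "4*d*(t-1) \<le> ?u\<^sup>2" by (smt (verit) zero_le_power2)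
    then have "t - 1 \<le> ?u\<^sup>2/(4*d)" using d by (simp add: le_divide_eq mult.commute)
    then have b2: "t - ?u\<^sup>2/(4*d) \<le> 1" by simp
    have b3: "?u/(2*d) \<le> 1" using u d by simp
    show ?thesis using cc_pos_cases(2)[OF d t] F1 True b1 b2 b3 u d by auto
  next
    case False then show ?thesis using cc_pos_cases(3)[OF d t] by simp
  qed
qed

lemma cc_bounds:
  assumes d: "0 < d" "d \<le> 1/2"
  shows "\<bar>cc d t\<bar> \<le> 1" "0 \<le> cc' d t" "cc' d t \<le> 1"
    "0 \<le> t \<Longrightarrow> 0 \<le> cc d t" "t \<le> 0 \<Longrightarrow> cc d t \<le> 0"
    "\<bar>t\<bar> \<le> 1 - d \<Longrightarrow> cc' d t = 1" "1 + d \<le> \<bar>t\<bar> \<Longrightarrow> cc' d t = 0"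
    "1 + d \<le> t \<Longrightarrow> cc d t = 1"
proof -
  have A: "0 \<le> cc d \<bar>t\<bar> \<and> cc d \<bar>t\<bar> \<le> 1 \<and> 0 \<le> cc' d \<bar>t\<bar> \<and> cc' d \<bar>t\<bar> \<le> 1"
    using cc_pos_bounds[OF d, of "\<bar>t\<bar>"] by simp
  have c0: "cc d 0 = 0" using cc_pos_cases(1)[OF d, of 0] d by simp
  have e1: "cc' d \<bar>t\<bar> = cc' d t"
  proof (cases "0 \<le> t")
    case True then show ?thesis by simp
  next
    case False then have "\<bar>t\<bar> = -t" by simp
    then show ?thesis by (simp only: cc_odd(2))
  qed
  have e2: "0 \<le> t \<Longrightarrow> cc d \<bar>t\<bar> = cc d t" by simp
  have e3: "t \<le> 0 \<Longrightarrow> cc d \<bar>t\<bar> = - cc d t"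
  proof -
    assume "t \<le> 0" then have "\<bar>t\<bar> = -t" by simp
    then show ?thesis by (simp only: cc_odd(1))
  qed
  show "0 \<le> cc' d t" "cc' d t \<le> 1" using A e1 by auto
  show "0 \<le> t \<Longrightarrow> 0 \<le> cc d t" using A e2 by auto
  show "t \<le> 0 \<Longrightarrow> cc d t \<le> 0" using A e3 by fastforce
  show "\<bar>cc d t\<bar> \<le> 1"
  proof (cases "0 \<le> t")
    case True then show ?thesis using A e2 by auto
  next
    case False then show ?thesis using A e3[of] by fastforce
  qed
  show "\<bar>t\<bar> \<le> 1 - d \<Longrightarrow> cc' d t = 1" using cc_pos_cases(1)[OF d, of "\<bar>t\<bar>"] e1 by simp
  show "1 + d \<le> \<bar>t\<bar> \<Longrightarrow> cc' d t = 0" using cc_pos_cases(3)[OF d, of "\<bar>t\<bar>"] e1 d by simp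
  show "1 + d \<le> t \<Longrightarrow> cc d t = 1" using cc_pos_cases(3)[OF d, of t] d by simp
qed


definition rho :: "real \<Rightarrow> real" where "rho t = 1 - Sm ((t-2)/2) - Sm ((-t-2)/2)"
definition rho' :: "real \<Rightarrow> real" where "rho' t = - Sm' ((t-2)/2)/2 + Sm' ((-t-2)/2)/2"

lemma rho_deriv: "DERIV rho t :> rho' t"
  unfolding rho_def rho'_def
  by (auto intro!: derivative_eq_intros DERIV_chain2[OF Sm_deriv] simp: field_simps)

lemma rho'_cont: "continuous_on UNIV rho'"
  unfolding rho'_def
  by (intro continuous_intros continuous_on_compose2[OF Sm'_cont]) auto

lemma rho_props:
  "0 \<le> rho t" "rho t \<le> 1" "\<bar>rho' t\<bar> \<le> 1" "0 \<le> t \<Longrightarrow> rho' t \<le> 0" "t \<le> 0 \<Longrightarrow> 0 \<le> rho' t"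
  "\<bar>t\<bar> \<le> 2 \<Longrightarrow> rho t = 1 \<and> rho' t = 0" "4 \<le> \<bar>t\<bar> \<Longrightarrow> rho t = 0"
proof -
  have z: "0 \<le> t \<Longrightarrow> Sm ((-t-2)/2) = 0 \<and> Sm' ((-t-2)/2) = 0" "t \<le> 0 \<Longrightarrow> Sm ((t-2)/2) = 0 \<and> Sm' ((t-2)/2) = 0"
    by (auto intro!: Sm_cases(1))
  have b: "0 \<le> Sm u" "Sm u \<le> 1" "0 \<le> Sm' u" "Sm' u \<le> 2" for u using Sm_bounds by auto
  show "0 \<le> rho t" "rho t \<le> 1" "\<bar>rho' t\<bar> \<le> 1" "0 \<le> t \<Longrightarrow> rho' t \<le> 0" "t \<le> 0 \<Longrightarrow> 0 \<le> rho' t"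
    using z b[of "(t-2)/2"] b[of "(-t-2)/2"] unfolding rho_def rho'_def by (cases "0 \<le> t"; fastforce)+
  show "\<bar>t\<bar> \<le> 2 \<Longrightarrow> rho t = 1 \<and> rho' t = 0"
    using Sm_cases(1)[of "(t-2)/2"] Sm_cases(1)[of "(-t-2)/2"] unfolding rho_def rho'_def by auto
  show "4 \<le> \<bar>t\<bar> \<Longrightarrow> rho t = 0"
    using z Sm_cases(4)[of "(t-2)/2"] Sm_cases(4)[of "(-t-2)/2"] unfolding rho_def by (cases "0 \<le> t") auto
qed

definition aa :: "real \<Rightarrow> real \<Rightarrow> real \<Rightarrow> real \<Rightarrow> real" where
  "aa sv t1 k t = 2* sv - sv * (Sm ((t - t1)/k) + Sm ((-t - t1)/k))"
definition aa' :: "real \<Rightarrow> real \<Rightarrow> real \<Rightarrow> real \<Rightarrow> real" where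
  "aa' sv t1 k t = - sv * (Sm' ((t - t1)/k)/k - Sm' ((-t - t1)/k)/k)"

lemma aa_deriv: assumes "k \<noteq> 0" shows "DERIV (aa sv t1 k) t :> aa' sv t1 k t"
  unfolding aa_def aa'_def using assms
  by (auto intro!: derivative_eq_intros DERIV_chain2[OF Sm_deriv] simp: field_simps)

lemma aa'_cont: "k \<noteq> 0 \<Longrightarrow> continuous_on UNIV (aa' sv t1 k)"
  unfolding aa'_def
  by (intro continuous_intros continuous_on_compose2[OF Sm'_cont]) auto

lemma aa_cont: "k \<noteq> 0 \<Longrightarrow> continuous_on UNIV (aa sv t1 k)"
  unfolding aa_def Sm_def q_def
  by (intro continuous_intros) auto

lemma aa_props:
  assumes "0 < sv" "0 < t1" "0 < k"
  shows "sv \<le> aa sv t1 k t" "aa sv t1 k t \<le> 2* sv" "\<bar>t\<bar> \<le> t1 \<Longrightarrow> aa sv t1 k t = 2* sv"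
    "t1 + k \<le> \<bar>t\<bar> \<Longrightarrow> aa sv t1 k t = sv"
proof -
  have b: "0 \<le> Sm u" "Sm u \<le> 1" for u using Sm_bounds by auto
  have z: "0 \<le> t \<Longrightarrow> Sm ((-t - t1)/k) = 0" "t \<le> 0 \<Longrightarrow> Sm ((t - t1)/k) = 0"
    using assms by (auto intro!: Sm_cases(1)[THEN conjunct1] simp: divide_nonpos_pos)
  have "sv * (Sm ((t - t1)/k) + Sm ((-t - t1)/k)) \<le> sv * 1"
    using z b[of "(t - t1)/k"] b[of "(-t - t1)/k"] assms by (cases "0 \<le> t") (auto intro!: mult_left_mono)
  moreover have "0 \<le> sv * (Sm ((t - t1)/k) + Sm ((-t - t1)/k))"
    using b assms by simp
  ultimately show "sv \<le> aa sv t1 k t" "aa sv t1 k t \<le> 2* sv" unfolding aa_def by auto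
  show "\<bar>t\<bar> \<le> t1 \<Longrightarrow> aa sv t1 k t = 2* sv"
    using assms Sm_cases(1)[of "(t - t1)/k"] Sm_cases(1)[of "(-t - t1)/k"] 
    by (auto simp: aa_def divide_nonpos_pos)
  show "t1 + k \<le> \<bar>t\<bar> \<Longrightarrow> aa sv t1 k t = sv"
    using assms z Sm_cases(4)[of "(t - t1)/k"] Sm_cases(4)[of "(-t - t1)/k"]
    by (cases "0 \<le> t") (auto simp: aa_def field_simps)
qed


lemma vec2_cases: "(i::2) = 1 \<or> i = 2" using exhaust_2 by metis

lemma C1c_build:
  fixes F G F1 F2 G1 G2 :: "real^2 \<Rightarrow> real"
  defines "Z \<equiv> (\<lambda>x. (\<chi> i. if i = 1 then F x else G x) :: real^2)"
  assumes dF: "\<And>x. (F has_derivative (\<lambda>v. F1 x * v$1 + F2 x * v$2)) (at x)"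
    and dG: "\<And>x. (G has_derivative (\<lambda>v. G1 x * v$1 + G2 x * v$2)) (at x)"
    and c: "continuous_on UNIV F1" "continuous_on UNIV F2" "continuous_on UNIV G1" "continuous_on UNIV G2"
    and supp: "\<And>x. 4 \<le> \<bar>x$1\<bar> \<or> 4 \<le> \<bar>x$2\<bar> \<Longrightarrow> F x = 0 \<and> G x = 0"
  shows "C1c_field Z"
    and "divergence Z x = F1 x + G2 x"
proof -
  define L where "L x = (\<lambda>v::real^2. (\<chi> i. if i = 1 then F1 x * v$1 + F2 x * v$2 else G1 x * v$1 + G2 x * v$2) :: real^2)" for x
  have bl: "bounded_linear (L x)" for x
  proof -
    have "linear (L x)"
      by (rule linearI) (auto simp: L_def vec_eq_iff algebra_simps)
    then show ?thesis by (simp add: linear_conv_bounded_linear)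
  qed
  define D where "D x = Blinfun (L x)" for x
  have DL: "blinfun_apply (D x) = L x" for x
    unfolding D_def using bl by (simp add: bounded_linear_Blinfun_apply)
  have der: "(Z has_derivative blinfun_apply (D x)) (at x)" for x
  proof -
    have "((\<lambda>x. Z x \<bullet> b) has_derivative (\<lambda>v. L x v \<bullet> b)) (at x)"
      if "b \<in> Basis" for b :: "real^2"
    proof -
      obtain i :: 2 where b: "b = axis i 1" using \<open>b \<in> Basis\<close> by (auto simp: Basis_vec_def)
      show ?thesis
        using vec2_cases[of i] dF[of x] dG[of x] by (auto simp: b inner_axis L_def Z_def)
    qed
    then show ?thesis unfolding DL
      using has_derivative_componentwise_within[of _ "L x" x UNIV] bl by simp
  qed
  have Dc: "continuous_on UNIV D"
  proof (rule continuous_on_blinfun_componentwise)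
    fix b :: "real^2" assume "b \<in> Basis"
    show "continuous_on UNIV (\<lambda>x. blinfun_apply (D x) b)"
      unfolding DL L_def
      apply (rule continuous_on_vec_lambda)
      subgoal for i using c by (cases "i = 1") (simp_all add: continuous_on_add continuous_on_mult_right)
      done
  qed
  have sub: "{x. Z x \<noteq> 0} \<subseteq> cbox ((\<chi> i. -4)::real^2) (\<chi> i. 4)"
  proof
    fix x :: "real^2" assume x: "x \<in> {x. Z x \<noteq> 0}"
    have "\<bar>x$1\<bar> < 4 \<and> \<bar>x$2\<bar> < 4"
    proof (rule ccontr)
      assume "\<not> (\<bar>x$1\<bar> < 4 \<and> \<bar>x$2\<bar> < 4)"
      then have "F x = 0 \<and> G x = 0" using supp by auto
      then have "Z x = 0" by (simp add: vec_eq_iff Z_def)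
      then show False using x by simp
    qed
    then have "\<forall>i. \<bar>x$i\<bar> \<le> 4" using vec2_cases by (metis less_eq_real_def)
    then show "x \<in> cbox ((\<chi> i. -4)::real^2) (\<chi> i. 4)"
      by (auto simp: mem_box_cart abs_le_iff) (smt (verit))
  qed
  have "compact (closure {x. Z x \<noteq> 0})"
    using sub by (meson bounded_cbox bounded_closure bounded_subset compact_closure)
  then show "C1c_field Z"
    unfolding C1c_field_def using der Dc by blast
  show "divergence Z x = F1 x + G2 x"
    by (simp add: divergence_D[OF der] DL L_def axis_def)
qed


lemma real_chain:
  fixes g :: "real^2 \<Rightarrow> real"
  assumes "DERIV f (g x) :> f'" "(g has_derivative g') (at x)"
  shows "((\<lambda>x. f (g x)) has_derivative (\<lambda>v. f' * g' v)) (at x)"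
  using has_derivative_compose[OF assms(2) assms(1)[unfolded has_field_derivative_def]] by (simp add: o_def)

lemma nth_deriv: "((\<lambda>x::real^2. x$i) has_derivative (\<lambda>v. v$i)) (at x)"
  by (rule bounded_linear_imp_has_derivative[OF bounded_linear_vec_nth])

definition tt1 :: "real \<Rightarrow> real \<Rightarrow> real" where "tt1 s d = 2 * s * (1 + d)"
definition kk :: "real \<Rightarrow> real \<Rightarrow> real" where "kk s d = sqrt (1/2) - tt1 s d"
definition AA :: "real \<Rightarrow> real \<Rightarrow> real \<Rightarrow> real" where "AA s d = aa s (tt1 s d) (kk s d)"
definition AA' :: "real \<Rightarrow> real \<Rightarrow> real \<Rightarrow> real" where "AA' s d = aa' s (tt1 s d) (kk s d)"

definition zH :: "real \<Rightarrow> real \<Rightarrow> 2 \<Rightarrow> 2 \<Rightarrow> real^2 \<Rightarrow> real" where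
  "zH s d i j x = - cc d (x$i / AA s d (x$j)) * rho (x$i) * rho (x$j)"
definition zHi :: "real \<Rightarrow> real \<Rightarrow> 2 \<Rightarrow> 2 \<Rightarrow> real^2 \<Rightarrow> real" where
  "zHi s d i j x = - (cc' d (x$i / AA s d (x$j)) / AA s d (x$j) * rho (x$i) + cc d (x$i / AA s d (x$j)) * rho' (x$i)) * rho (x$j)"
definition zHj :: "real \<Rightarrow> real \<Rightarrow> 2 \<Rightarrow> 2 \<Rightarrow> real^2 \<Rightarrow> real" where
  "zHj s d i j x = - (cc' d (x$i / AA s d (x$j)) * (- x$i * AA' s d (x$j) / (AA s d (x$j))\<^sup>2) * rho (x$j) + cc d (x$i / AA s d (x$j)) * rho' (x$j)) * rho (x$i)"

locale params =
  fixes s d :: real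
  assumes s_pos: "0 < s" and d_pos: "0 < d" and d_le: "d \<le> 1/2" and small: "8 * s\<^sup>2 * (1 + d)\<^sup>2 < 1"
begin

lemma tt1_pos: "0 < tt1 s d" using s_pos d_pos by (simp add: tt1_def)

lemma tt1_lt: "tt1 s d < sqrt (1/2)"
proof -
  have "(tt1 s d)\<^sup>2 = 4 * s\<^sup>2 * (1+d)\<^sup>2" by (simp add: tt1_def power2_eq_square)
  also have "\<dots> < 1/2" using small by simp
  finally have "(tt1 s d)\<^sup>2 < 1/2" .
  then show ?thesis using tt1_pos by (simp add: real_less_rsqrt)
qed

lemma kk_pos: "0 < kk s d" using tt1_lt by (simp add: kk_def)

lemma AA_props: "s \<le> AA s d t" "AA s d t \<le> 2 * s" "\<bar>t\<bar> \<le> tt1 s d \<Longrightarrow> AA s d t = 2 * s"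
    "sqrt (1/2) \<le> \<bar>t\<bar> \<Longrightarrow> AA s d t = s"
  using aa_props[OF s_pos tt1_pos kk_pos, of t] by (auto simp: AA_def kk_def)

lemma AA_pos: "0 < AA s d t" using AA_props(1)[of t] s_pos by simp

lemma AA_deriv: "DERIV (AA s d) t :> AA' s d t"
  unfolding AA_def AA'_def using kk_pos by (intro aa_deriv) simp

lemma zH_deriv: "(zH s d i j has_derivative (\<lambda>v. zHi s d i j x * v$i + zHj s d i j x * v$j)) (at x)"
proof -
  have a: "AA s d (x$j) \<noteq> 0" using AA_pos[of "x$j"] by simp
  have d0: "d \<noteq> 0" using d_pos by simp
  have h1: "((\<lambda>x. x$i / AA s d (x$j)) has_derivative (\<lambda>h. (h$i * AA s d (x$j) - x$i * (AA' s d (x$j) * h$j)) / (AA s d (x$j) * AA s d (x$j)))) (at x)"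
    by (rule has_derivative_divide'[OF nth_deriv real_chain[OF AA_deriv nth_deriv] a])
  note h2 = real_chain[OF cc_deriv[OF d0] h1]
  note h3 = real_chain[OF rho_deriv nth_deriv[of i]]
  note h4 = real_chain[OF rho_deriv nth_deriv[of j]]
  note h5 = has_derivative_mult[OF has_derivative_mult[OF has_derivative_minus[OF h2] h3] h4]
  have e: "zH s d i j = (\<lambda>x. - cc d (x$i / AA s d (x$j)) * rho (x$i) * rho (x$j))"
    by (simp add: zH_def[abs_def])
  show ?thesis unfolding e
    apply (rule has_derivative_eq_rhs[OF h5])
    using a by (auto simp: fun_eq_iff zHi_def zHj_def field_simps power2_eq_square)
qed

lemma cont_of_deriv: "(\<And>t. DERIV f t :> f' t) \<Longrightarrow> continuous_on UNIV f"
  by (meson DERIV_isCont continuous_at_imp_continuous_on)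

lemma cc_cont: "continuous_on UNIV (cc d)"
  using d_pos by (intro cont_of_deriv[OF cc_deriv]) simp
lemma rho_cont: "continuous_on UNIV rho"
  by (intro cont_of_deriv[OF rho_deriv])
lemma AA_cont: "continuous_on UNIV (AA s d)"
  by (intro cont_of_deriv[OF AA_deriv])
lemma AA'_cont: "continuous_on UNIV (AA' s d)"
  unfolding AA'_def using kk_pos by (intro aa'_cont) simp
lemma cc'_cont': "continuous_on UNIV (cc' d)"
  using d_pos by (intro cc'_cont) simp

lemma comp_cont: "continuous_on UNIV f \<Longrightarrow> continuous_on UNIV g \<Longrightarrow> continuous_on UNIV (\<lambda>x. f (g x))"
  by (rule continuous_on_compose2[of UNIV f UNIV g]) auto

lemma nth_cont: "continuous_on UNIV (\<lambda>x::real^2. x$i)"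
  by (intro continuous_on_component continuous_on_id)

lemma u_cont: "continuous_on UNIV (\<lambda>x::real^2. x$i / AA s d (x$j))"
  using AA_pos by (intro continuous_on_divide nth_cont comp_cont[OF AA_cont]) (auto simp: less_imp_neq[symmetric])

lemma zHi_cont: "continuous_on UNIV (zHi s d i j)"
  unfolding zHi_def[abs_def] using AA_pos
  by (intro continuous_intros comp_cont[OF cc'_cont' u_cont] comp_cont[OF cc_cont u_cont] comp_cont[OF AA_cont nth_cont]
     comp_cont[OF rho_cont nth_cont] comp_cont[OF rho'_cont nth_cont]) (auto simp: less_imp_neq[symmetric])

lemma zHj_cont: "continuous_on UNIV (zHj s d i j)"
  unfolding zHj_def[abs_def] using AA_pos
  by (intro continuous_intros comp_cont[OF cc'_cont' u_cont] comp_cont[OF cc_cont u_cont] comp_cont[OF AA_cont nth_cont]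
     comp_cont[OF AA'_cont nth_cont] comp_cont[OF rho_cont nth_cont] comp_cont[OF rho'_cont nth_cont]) (auto simp: less_imp_neq[symmetric])

lemma dF: "(zH s d 1 2 has_derivative (\<lambda>v. zHi s d 1 2 x * v$1 + zHj s d 1 2 x * v$2)) (at x)"
  by (rule zH_deriv)
lemma dG: "(zH s d 2 1 has_derivative (\<lambda>v. zHj s d 2 1 x * v$1 + zHi s d 2 1 x * v$2)) (at x)"
  by (rule has_derivative_eq_rhs[OF zH_deriv]) (auto simp: fun_eq_iff)

lemma zH_supp: "4 \<le> \<bar>x$1\<bar> \<or> 4 \<le> \<bar>x$2\<bar> \<Longrightarrow> zH s d i j x = 0"
  if "i \<noteq> j" 
proof -
  assume a: "4 \<le> \<bar>x$1\<bar> \<or> 4 \<le> \<bar>x$2\<bar>"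
  have "rho (x$i) * rho (x$j) = rho (x$1) * rho (x$2)"
    using that vec2_cases[of i] vec2_cases[of j] by auto
  moreover have "rho (x$1) * rho (x$2) = 0" using a rho_props(7) by auto
  ultimately show ?thesis by (simp add: zH_def)
qed

definition zfield where "zfield = (\<lambda>x. (\<chi> k. if k = 1 then zH s d 1 2 x else zH s d 2 1 x) :: real^2)"

lemma zfield_C1c: "C1c_field zfield"
  and zfield_div: "divergence zfield x = zHi s d 1 2 x + zHi s d 2 1 x"
  unfolding zfield_def
  using C1c_build[OF dF dG zHi_cont zHj_cont zHj_cont zHi_cont] zH_supp by auto

end


context params
begin

lemma s_le: "s \<le> 1/2"
proof -
  have "1 \<le> (1+d)\<^sup>2" using d_pos by (intro one_le_power) simp
  then have "8 * s\<^sup>2 * 1 \<le> 8 * s\<^sup>2 * (1+d)\<^sup>2"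
    by (intro mult_left_mono) auto
  then have "8 * s\<^sup>2 < 1" using small by simp
  then have "s\<^sup>2 < (1/2)\<^sup>2" by (simp add: power2_eq_square)
  then show ?thesis using s_pos by (meson less_imp_le power_less_imp_less_base zero_le_divide_1_iff zero_le_numeral)
qed

lemma zfield_bound: "\<bar>zfield x $ k\<bar> \<le> 1"
proof -
  have "\<bar>zH s d i j x\<bar> \<le> 1" for i j
  proof -
    have "\<bar>zH s d i j x\<bar> = \<bar>cc d (x$i / AA s d (x$j))\<bar> * \<bar>rho (x$i)\<bar> * \<bar>rho (x$j)\<bar>"
      by (simp add: zH_def abs_mult)
    also have "\<dots> \<le> 1 * 1 * 1"
      using cc_bounds(1)[OF d_pos d_le] rho_props(1,2)
      by (intro mult_mono) auto
    finally show ?thesis by simp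
  qed
  then show ?thesis by (simp add: zfield_def)
qed

lemma part_decomp:
  assumes ij: "i \<noteq> j"
  shows "\<exists>a p. zHi s d i j x = - a - p \<and> 0 \<le> a \<and> a \<le> cc' d (x$i / AA s d (x$j)) / AA s d (x$j)
          \<and> -1 \<le> p \<and> p \<le> 0 \<and> (\<bar>x$1\<bar> \<le> 2 \<and> \<bar>x$2\<bar> \<le> 2 \<longrightarrow> p = 0 \<and> a = cc' d (x$i / AA s d (x$j)) / AA s d (x$j))"
proof -
  let ?A = "AA s d (x$j)" and ?u = "x$i / AA s d (x$j)"
  define a where "a = cc' d ?u / ?A * rho (x$i) * rho (x$j)"
  define p where "p = cc d ?u * rho' (x$i) * rho (x$j)"
  have Ap: "0 < ?A" by (rule AA_pos)
  have c': "0 \<le> cc' d ?u" "cc' d ?u \<le> 1" using cc_bounds[OF d_pos d_le] by auto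
  have r: "0 \<le> rho t" "rho t \<le> 1" for t using rho_props by auto
  have e: "zHi s d i j x = - a - p" by (simp add: zHi_def a_def p_def algebra_simps)
  have a0: "0 \<le> a" using c' Ap r by (simp add: a_def)
  have a1: "a \<le> cc' d ?u / ?A"
  proof -
    have "a = (cc' d ?u / ?A) * (rho (x$i) * rho (x$j))" by (simp add: a_def)
    also have "\<dots> \<le> (cc' d ?u / ?A) * 1"
      using c' Ap r by (intro mult_left_mono) (auto intro: mult_le_one)
    finally show ?thesis by simp
  qed
  have p0: "p \<le> 0"
  proof (cases "0 \<le> x$i")
    case True
    then have "0 \<le> cc d ?u" "rho' (x$i) \<le> 0" using Ap cc_bounds(4)[OF d_pos d_le] rho_props(4) by auto
    then show ?thesis using r[of "x$j"] by (simp add: p_def mult_nonneg_nonpos mult_nonpos_nonneg)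
  next
    case False
    then have "cc d ?u \<le> 0" "0 \<le> rho' (x$i)" using Ap cc_bounds(5)[OF d_pos d_le] rho_props(5)
      by (auto simp: divide_nonpos_pos)
    then show ?thesis using r[of "x$j"] by (simp add: p_def mult_nonpos_nonneg)
  qed
  have p1: "-1 \<le> p"
  proof -
    have "\<bar>p\<bar> = \<bar>cc d ?u\<bar> * \<bar>rho' (x$i)\<bar> * \<bar>rho (x$j)\<bar>" by (simp add: p_def abs_mult)
    also have "\<dots> \<le> 1 * 1 * 1"
      using cc_bounds(1)[OF d_pos d_le] rho_props(3) r by (intro mult_mono) auto
    finally show ?thesis by simp
  qed
  have inner: "\<bar>x$1\<bar> \<le> 2 \<and> \<bar>x$2\<bar> \<le> 2 \<longrightarrow> p = 0 \<and> a = cc' d ?u / ?A"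
  proof
    assume b: "\<bar>x$1\<bar> \<le> 2 \<and> \<bar>x$2\<bar> \<le> 2"
    then have "\<bar>x$i\<bar> \<le> 2" "\<bar>x$j\<bar> \<le> 2" using vec2_cases[of i] vec2_cases[of j] by auto
    then show "p = 0 \<and> a = cc' d ?u / ?A" using rho_props(6) by (auto simp: a_def p_def)
  qed
  show ?thesis using e a0 a1 p0 p1 inner by blast
qed

lemma div_bound: "\<bar>divergence zfield x\<bar> \<le> 1 / s"
proof -
  obtain a1 p1 where 1: "zHi s d 1 2 x = - a1 - p1" "0 \<le> a1" "a1 \<le> cc' d (x$1 / AA s d (x$2)) / AA s d (x$2)"
      "-1 \<le> p1" "p1 \<le> 0"
    using part_decomp[of 1 2 x] by auto
  obtain a2 p2 where 2: "zHi s d 2 1 x = - a2 - p2" "0 \<le> a2" "a2 \<le> cc' d (x$2 / AA s d (x$1)) / AA s d (x$1)"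
      "-1 \<le> p2" "p2 \<le> 0"
    using part_decomp[of 2 1 x] by auto
  have cb: "cc' d t \<le> 1" for t using cc_bounds(3)[OF d_pos d_le] .
  have Ab: "1 / AA s d t \<le> 1 / s" for t using AA_props(1)[of t] s_pos AA_pos[of t] by (simp add: frac_le)
  have q1: "cc' d t / AA s d y \<le> 1 / s" for t y
  proof -
    have "cc' d t / AA s d y \<le> 1 / AA s d y" using cb[of t] AA_pos[of y] by (simp add: divide_right_mono)
    then show ?thesis using Ab[of y] by simp
  qed
  have asum: "a1 + a2 \<le> 1 / s"
  proof (cases "cc' d (x$1 / AA s d (x$2)) = 0 \<or> cc' d (x$2 / AA s d (x$1)) = 0")
    case True
    then show ?thesis using 1 2 q1[of "x$1 / AA s d (x$2)" "x$2"] q1[of "x$2 / AA s d (x$1)" "x$1"] by auto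
  next
    case False
    have lt: "\<bar>x$i / AA s d (x$j)\<bar> < 1 + d" if "cc' d (x$i / AA s d (x$j)) \<noteq> 0" for i j
      using cc_bounds(7)[OF d_pos d_le, of "x$i / AA s d (x$j)"] that by linarith
    have sm: "\<bar>x$i\<bar> \<le> tt1 s d" if "cc' d (x$i / AA s d (x$j)) \<noteq> 0" for i j
    proof -
      have "\<bar>x$i\<bar> = \<bar>x$i / AA s d (x$j)\<bar> * AA s d (x$j)" using AA_pos[of "x$j"] by (simp add: abs_divide)
      also have "\<dots> \<le> (1 + d) * (2 * s)"
        using lt[OF that] AA_props(2)[of "x$j"] AA_pos[of "x$j"] d_pos by (intro mult_mono) auto
      finally show ?thesis by (simp add: tt1_def algebra_simps)
    qed
    have A1: "AA s d (x$1) = 2 * s" using sm[of 1 2] False AA_props(3) by auto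
    have A2: "AA s d (x$2) = 2 * s" using sm[of 2 1] False AA_props(3) by auto
    have "a1 \<le> 1 / (2 * s)" using 1(3) cb[of "x$1 / AA s d (x$2)"] A2 s_pos by (simp add: divide_right_mono order_trans)
    moreover have "a2 \<le> 1 / (2 * s)" using 2(3) cb[of "x$2 / AA s d (x$1)"] A1 s_pos by (simp add: divide_right_mono order_trans)
    ultimately show ?thesis by simp
  qed
  have "2 \<le> 1 / s" using s_le s_pos by (simp add: field_simps)
  then show ?thesis using zfield_div[of x] 1 2 asum by auto
qed

end


lemma line_deriv2:
  fixes F F1 F2 :: "real^2 \<Rightarrow> real"
  assumes dF: "\<And>x. (F has_derivative (\<lambda>v. F1 x * v$1 + F2 x * v$2)) (at x)"
  shows "DERIV (\<lambda>t. F (e1 (y,t))) t :> F1 (e1 (y,t))" and "DERIV (\<lambda>t. F (e2 (y,t))) t :> F2 (e2 (y,t))"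
proof -
  have l1: "(\<lambda>t. e1 (y,t)) = (\<lambda>t. e1 (y,0) + t *\<^sub>R axis 1 1)" by (rule ext) (rule e1_line)
  have l2: "(\<lambda>t. e2 (y,t)) = (\<lambda>t. e2 (y,0) + t *\<^sub>R axis 2 1)" by (rule ext) (rule e2_line)
  have d1: "((\<lambda>t. e1 (y,t)) has_derivative (\<lambda>v. v *\<^sub>R axis 1 1)) (at t)"
    unfolding l1 by (auto intro!: derivative_eq_intros)
  have d2: "((\<lambda>t. e2 (y,t)) has_derivative (\<lambda>v. v *\<^sub>R axis 2 1)) (at t)"
    unfolding l2 by (auto intro!: derivative_eq_intros)
  show "DERIV (\<lambda>t. F (e1 (y,t))) t :> F1 (e1 (y,t))"
    unfolding has_field_derivative_def
    using has_derivative_compose[OF d1 dF[of "e1 (y,t)"]]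
    by (simp add: o_def axis_def mult.commute[of _ "F1 (e1 (y,t))"])
  show "DERIV (\<lambda>t. F (e2 (y,t))) t :> F2 (e2 (y,t))"
    unfolding has_field_derivative_def
    using has_derivative_compose[OF d2 dF[of "e2 (y,t)"]]
    by (simp add: o_def axis_def mult.commute[of _ "F2 (e2 (y,t))"])
qed

context params
begin

definition hh where "hh = sqrt (1 - s\<^sup>2)"
definition hh' where "hh' = sqrt (1 - (1+d)\<^sup>2 * s\<^sup>2)"

lemma s2_small: "(1+d)\<^sup>2 * s\<^sup>2 < 1/8"
  using small by (simp add: algebra_simps)

lemma s2_le: "s\<^sup>2 \<le> (1+d)\<^sup>2 * s\<^sup>2"
proof -
  have "1 \<le> (1+d)\<^sup>2" using d_pos by (intro one_le_power) simp
  then show ?thesis by (simp add: mult_le_cancel_right1)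
qed

lemma hh_ge: "sqrt (1/2) \<le> hh'" "hh' \<le> hh" "hh \<le> 1" "0 \<le> hh'"
proof -
  show "sqrt (1/2) \<le> hh'" unfolding hh'_def using s2_small by (intro real_sqrt_le_mono) simp
  show "hh' \<le> hh" unfolding hh'_def hh_def using s2_le by (intro real_sqrt_le_mono) simp
  show "hh \<le> 1" unfolding hh_def by simp
  show "0 \<le> hh'" unfolding hh'_def using s2_small by simp
qed

lemma tt1_le_hh: "tt1 s d \<le> hh" using tt1_lt hh_ge by simp

lemma good_slice:
  assumes y: "\<bar>y\<bar> \<le> hh'"
  shows "(1 + d) * AA s d y \<le> wU hh y"
proof (cases "\<bar>y\<bar> \<le> sqrt (1/2)")
  case True
  have "(1 + d) * AA s d y \<le> (1 + d) * (2 * s)" using AA_props(2)[of y] d_pos by simp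
  also have "\<dots> = tt1 s d" by (simp add: tt1_def)
  finally have a: "(1 + d) * AA s d y \<le> tt1 s d" .
  have "y\<^sup>2 \<le> 1/2" using True sqrt_le_iff_aux[of "1/2" y] by simp
  then have c: "sqrt (1/2) \<le> sqrt (1 - y\<^sup>2)" by (intro real_sqrt_le_mono) simp
  have "(1 + d) * AA s d y \<le> sqrt (1 - y\<^sup>2)" using a tt1_lt c by linarith
  moreover have "(1 + d) * AA s d y \<le> hh" using a tt1_le_hh by linarith
  ultimately show ?thesis by (simp add: wU_def)
next
  case False
  then have A: "AA s d y = s" using AA_props(4)[of y] by simp
  have "\<bar>y\<bar>\<^sup>2 \<le> hh'\<^sup>2" using y by (intro power_mono) auto
  then have "y\<^sup>2 \<le> hh'\<^sup>2" by simp
  also have "\<dots> = 1 - (1+d)\<^sup>2 * s\<^sup>2" unfolding hh'_def using s2_small by simp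
  finally have "((1+d) * s)\<^sup>2 \<le> 1 - y\<^sup>2" by (simp add: power_mult_distrib)
  then have b: "(1+d) * s \<le> sqrt (1 - y\<^sup>2)" using s_pos d_pos by (simp add: real_le_rsqrt)
  have "(1+d) * s \<le> tt1 s d" using s_pos d_pos by (simp add: tt1_def)
  then show ?thesis using A b tt1_le_hh by (simp add: wU_def)
qed

end


context params
begin

lemma hh_nonneg: "0 \<le> hh" using hh_ge by linarith

lemma zH_e1: "zH s d 1 2 (e1 (y,t)) = - cc d (t / AA s d y) * rho t * rho y"
  by (simp add: zH_def)
lemma zH_e2: "zH s d 2 1 (e2 (y,t)) = - cc d (t / AA s d y) * rho t * rho y"
  by (simp add: zH_def)

lemma wU_le1: "\<bar>y\<bar> \<le> hh \<Longrightarrow> wU hh y \<le> 1" using hh_ge by (simp add: wU_def)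

lemma slice_val:
  assumes y: "\<bar>y\<bar> \<le> hh"
  shows "- cc d (wU hh y / AA s d y) * rho (wU hh y) * rho y - (- cc d (- wU hh y / AA s d y) * rho (- wU hh y) * rho y)
     = - 2 * cc d (wU hh y / AA s d y)"
proof -
  have w: "0 \<le> wU hh y" "wU hh y \<le> 1" using wU_nonneg[OF hh_nonneg hh_ge(3) y] wU_le1[OF y] by auto
  have "\<bar>y\<bar> \<le> 1" using y hh_ge by linarith
  then have r: "rho (wU hh y) = 1" "rho (- wU hh y) = 1" "rho y = 1" using w rho_props(6) by auto
  have "cc d (- wU hh y / AA s d y) = - cc d (wU hh y / AA s d y)"
    using cc_odd(1)[of d "wU hh y / AA s d y"] by simp
  then show ?thesis using r by simp
qed

lemma Wf_cont: "continuous_on UNIV (\<lambda>y. cc d (wU hh y / AA s d y))"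
proof -
  have "continuous_on UNIV (wU hh)" unfolding wU_def[abs_def] by (intro continuous_intros)
  then have "continuous_on UNIV (\<lambda>y. wU hh y / AA s d y)"
    using AA_pos by (intro continuous_on_divide AA_cont) (auto simp: less_imp_neq[symmetric])
  then show ?thesis by (rule comp_cont[OF cc_cont])
qed

lemma slice_lower:
  "4 * hh' \<le> (\<integral>y. indicator {-hh..hh} y * (2 * cc d (wU hh y / AA s d y)) \<partial>lborel)"
proof -
  have "(\<integral>y. indicator {-hh'..hh'} y * 2 \<partial>lborel) \<le> (\<integral>y. indicator {-hh..hh} y * (2 * cc d (wU hh y / AA s d y)) \<partial>lborel)"
  proof (rule integral_mono)
    show "integrable lborel (\<lambda>y. indicator {-hh'..hh'} y * (2::real))"
      by (intro integrable_mult_left integrable_real_indicator) (auto simp: emeasure_lborel_Icc_eq)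
    have "integrable lborel (\<lambda>y. indicator {-hh..hh} y *\<^sub>R (2 * cc d (wU hh y / AA s d y)))"
      by (intro borel_integrable_compact compact_Icc continuous_on_mult continuous_on_const
          continuous_on_subset[OF Wf_cont]) auto
    then show "integrable lborel (\<lambda>y. indicator {-hh..hh} y * (2 * cc d (wU hh y / AA s d y)))" by simp
    fix y :: real
    show "indicator {-hh'..hh'} y * 2 \<le> indicator {-hh..hh} y * (2 * cc d (wU hh y / AA s d y))"
    proof (cases "\<bar>y\<bar> \<le> hh'")
      case True
      then have yh: "\<bar>y\<bar> \<le> hh" using hh_ge by linarith
      have "(1 + d) * AA s d y \<le> wU hh y" by (rule good_slice[OF True])
      then have "1 + d \<le> wU hh y / AA s d y" using AA_pos[of y] by (simp add: le_divide_eq)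
      then have "cc d (wU hh y / AA s d y) = 1" by (rule cc_bounds(8)[OF d_pos d_le])
      then show ?thesis using True yh by (simp add: indicator_def abs_le_iff)
    next
      case False
      have "0 \<le> cc d (wU hh y / AA s d y)" if "\<bar>y\<bar> \<le> hh"
        using wU_nonneg[OF hh_nonneg hh_ge(3) that] AA_pos[of y] by (intro cc_bounds(4)[OF d_pos d_le]) simp
      then show ?thesis using False by (auto simp: indicator_def abs_le_iff)
    qed
  qed
  moreover have "(\<integral>y. indicator {-hh'..hh'} y * 2 \<partial>lborel) = 4 * hh'" using hh_ge by simp
  ultimately show ?thesis by simp
qed

lemma U_part1: "4 * hh' \<le> - (\<integral>x. indicator (Uset hh) x * zHi s d 1 2 x \<partial>lebesgue)"
proof -
  have "(\<integral>x. indicator (Uset hh) x * zHi s d 1 2 x \<partial>lebesgue)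
     = (\<integral>y. indicator {-hh..hh} y * (zH s d 1 2 (e1 (y, wU hh y)) - zH s d 1 2 (e1 (y, - wU hh y))) \<partial>lborel)"
    by (rule slice_integral[OF lborel_e1 e1_meas e1_cont line_deriv2(1)[OF dF] zHi_cont compact_U
          U_slice1[OF hh_nonneg hh_ge(3)] wU_nonneg[OF hh_nonneg hh_ge(3)]])
  also have "\<dots> = (\<integral>y. - (indicator {-hh..hh} y * (2 * cc d (wU hh y / AA s d y))) \<partial>lborel)"
  proof (rule Bochner_Integration.integral_cong[OF refl])
    fix y
    show "indicator {-hh..hh} y * (zH s d 1 2 (e1 (y, wU hh y)) - zH s d 1 2 (e1 (y, - wU hh y)))
        = - (indicator {-hh..hh} y * (2 * cc d (wU hh y / AA s d y)))"
    proof (cases "\<bar>y\<bar> \<le> hh")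
      case True
      then have "zH s d 1 2 (e1 (y, wU hh y)) - zH s d 1 2 (e1 (y, - wU hh y)) = - 2 * cc d (wU hh y / AA s d y)"
        using slice_val[OF True] by (simp only: zH_e1)
      then show ?thesis by simp
    next
      case False then show ?thesis by (auto simp add: indicator_def abs_le_iff)
    qed
  qed
  also have "\<dots> = - (\<integral>y. indicator {-hh..hh} y * (2 * cc d (wU hh y / AA s d y)) \<partial>lborel)"
    by (rule integral_minus)
  finally show ?thesis using slice_lower by simp
qed

lemma U_part2: "4 * hh' \<le> - (\<integral>x. indicator (Uset hh) x * zHi s d 2 1 x \<partial>lebesgue)"
proof -
  have "(\<integral>x. indicator (Uset hh) x * zHi s d 2 1 x \<partial>lebesgue)
     = (\<integral>y. indicator {-hh..hh} y * (zH s d 2 1 (e2 (y, wU hh y)) - zH s d 2 1 (e2 (y, - wU hh y))) \<partial>lborel)"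
    by (rule slice_integral[OF lborel_e2 e2_meas e2_cont line_deriv2(2)[OF dG] zHi_cont compact_U
          U_slice2[OF hh_nonneg hh_ge(3)] wU_nonneg[OF hh_nonneg hh_ge(3)]])
  also have "\<dots> = (\<integral>y. - (indicator {-hh..hh} y * (2 * cc d (wU hh y / AA s d y))) \<partial>lborel)"
  proof (rule Bochner_Integration.integral_cong[OF refl])
    fix y
    show "indicator {-hh..hh} y * (zH s d 2 1 (e2 (y, wU hh y)) - zH s d 2 1 (e2 (y, - wU hh y)))
        = - (indicator {-hh..hh} y * (2 * cc d (wU hh y / AA s d y)))"
    proof (cases "\<bar>y\<bar> \<le> hh")
      case True
      then have "zH s d 2 1 (e2 (y, wU hh y)) - zH s d 2 1 (e2 (y, - wU hh y)) = - 2 * cc d (wU hh y / AA s d y)"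
        using slice_val[OF True] by (simp only: zH_e2)
      then show ?thesis by simp
    next
      case False then show ?thesis by (auto simp add: indicator_def abs_le_iff)
    qed
  qed
  also have "\<dots> = - (\<integral>y. indicator {-hh..hh} y * (2 * cc d (wU hh y / AA s d y)) \<partial>lborel)"
    by (rule integral_minus)
  finally show ?thesis using slice_lower by simp
qed

lemma zfield_div_cont: "continuous_on UNIV (divergence zfield)"
  unfolding zfield_div[abs_def] by (intro continuous_on_add zHi_cont)

lemma U_lower: "8 * hh' \<le> - (\<integral>x. indicator (Uset hh) x * divergence zfield x \<partial>lebesgue)"
proof -
  have "(\<integral>x. indicator (Uset hh) x * divergence zfield x \<partial>lebesgue)
      = (\<integral>x. indicator (Uset hh) x * zHi s d 1 2 x + indicator (Uset hh) x * zHi s d 2 1 x \<partial>lebesgue)"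
    by (simp add: zfield_div algebra_simps)
  also have "\<dots> = (\<integral>x. indicator (Uset hh) x * zHi s d 1 2 x \<partial>lebesgue) + (\<integral>x. indicator (Uset hh) x * zHi s d 2 1 x \<partial>lebesgue)"
    by (intro Bochner_Integration.integral_add int_compact_lebesgue compact_U zHi_cont)
  finally show ?thesis using U_part1 U_part2 by simp
qed

end


definition vv :: "real \<Rightarrow> real \<Rightarrow> real^2" where "vv a b = (\<chi> k. if k = 1 then a else b)"

lemma vv_simps[simp]: "vv a b $ 1 = a" "vv a b $ 2 = b" by (auto simp: vv_def)

lemma mem_cbox_vv: "x \<in> cbox (vv a b) (vv c e) \<longleftrightarrow> a \<le> x$1 \<and> x$1 \<le> c \<and> b \<le> x$2 \<and> x$2 \<le> e"
  by (auto simp: mem_box_cart forall_2)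

lemma measure_cbox_vv: "a \<le> c \<Longrightarrow> b \<le> e \<Longrightarrow> measure lborel (cbox (vv a b) (vv c e)) = (c - a) * (e - b)"
  unfolding measure_lborel_cbox_eq prod_basis2 by (simp add: Basis_cart2 inner_axis)

context params
begin

definition Bad where "Bad = cbox (vv (-1) (s*(1-d))) (vv 1 s) \<union> cbox (vv (-1) (-s)) (vv 1 (-(s*(1-d))))
  \<union> cbox (vv (s*(1-d)) (-1)) (vv s 1) \<union> cbox (vv (-s) (-1)) (vv (-(s*(1-d))) 1)"

lemma Bad_sets: "Bad \<in> sets lborel" unfolding Bad_def by simp

lemma Bad_measure: "measure lborel Bad \<le> 8 * s * d"
proof -
  have le: "s*(1-d) \<le> s" "-s \<le> -(s*(1-d))" using s_pos d_pos by (auto simp: algebra_simps)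
  have m: "measure lborel (cbox (vv (-1) (s*(1-d))) (vv 1 s)) = 2 * (s * d)"
          "measure lborel (cbox (vv (-1) (-s)) (vv 1 (-(s*(1-d))))) = 2 * (s * d)"
          "measure lborel (cbox (vv (s*(1-d)) (-1)) (vv s 1)) = 2 * (s * d)"
          "measure lborel (cbox (vv (-s) (-1)) (vv (-(s*(1-d))) 1)) = 2 * (s * d)"
    using le by (simp_all add: measure_cbox_vv algebra_simps)
  have "measure lborel Bad \<le> measure lborel (cbox (vv (-1) (s*(1-d))) (vv 1 s) \<union> cbox (vv (-1) (-s)) (vv 1 (-(s*(1-d))))
        \<union> cbox (vv (s*(1-d)) (-1)) (vv s 1)) + measure lborel (cbox (vv (-s) (-1)) (vv (-(s*(1-d))) 1))"
    unfolding Bad_def by (rule measure_Un_le) auto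
  also have "\<dots> \<le> (measure lborel (cbox (vv (-1) (s*(1-d))) (vv 1 s) \<union> cbox (vv (-1) (-s)) (vv 1 (-(s*(1-d)))))
        + measure lborel (cbox (vv (s*(1-d)) (-1)) (vv s 1))) + measure lborel (cbox (vv (-s) (-1)) (vv (-(s*(1-d))) 1))"
    by (intro add_right_mono measure_Un_le) auto
  also have "\<dots> \<le> ((measure lborel (cbox (vv (-1) (s*(1-d))) (vv 1 s)) + measure lborel (cbox (vv (-1) (-s)) (vv 1 (-(s*(1-d))))))
        + measure lborel (cbox (vv (s*(1-d)) (-1)) (vv s 1))) + measure lborel (cbox (vv (-s) (-1)) (vv (-(s*(1-d))) 1))"
    by (intro add_right_mono measure_Un_le) auto
  also have "\<dots> = 8 * s * d" unfolding m by simp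
  finally show ?thesis .
qed

lemma hh_sq: "hh\<^sup>2 = 1 - s\<^sup>2" unfolding hh_def using s_le s_pos
  by (simp add: power_le_one)

lemma div_in_B:
  assumes "x \<in> Bset"
  shows "- divergence zfield x = cc' d (x$1 / AA s d (x$2)) / AA s d (x$2) + cc' d (x$2 / AA s d (x$1)) / AA s d (x$1)"
proof -
  have k1: "\<bar>x$k\<bar> \<le> 1" for k using assms component_le_norm_cart[of x k] by (auto simp: Bset_def)
  have b: "\<bar>x$1\<bar> \<le> 2 \<and> \<bar>x$2\<bar> \<le> 2" using k1[of 1] k1[of 2] by simp
  obtain a1 p1 where 1: "zHi s d 1 2 x = - a1 - p1" "(\<bar>x$1\<bar> \<le> 2 \<and> \<bar>x$2\<bar> \<le> 2 \<longrightarrow> p1 = 0 \<and> a1 = cc' d (x$1 / AA s d (x$2)) / AA s d (x$2))"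
    using part_decomp[of 1 2 x] by auto
  obtain a2 p2 where 2: "zHi s d 2 1 x = - a2 - p2" "(\<bar>x$1\<bar> \<le> 2 \<and> \<bar>x$2\<bar> \<le> 2 \<longrightarrow> p2 = 0 \<and> a2 = cc' d (x$2 / AA s d (x$1)) / AA s d (x$1))"
    using part_decomp[of 2 1 x] by auto
  show ?thesis using 1 2 b zfield_div[of x] by simp
qed

lemma div_nonpos_B: "x \<in> Bset \<Longrightarrow> 0 \<le> - divergence zfield x"
  unfolding div_in_B[of x] by (intro add_nonneg_nonneg divide_nonneg_pos cc_bounds(2)[OF d_pos d_le] AA_pos)

lemma cap_good:
  assumes B: "x \<in> Bset" and i: "i \<noteq> j" and x1: "hh < \<bar>x$i\<bar>" and x2: "\<bar>x$j\<bar> < s*(1-d)"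
  shows "- divergence zfield x = 1 / s"
proof -
  have n: "(x$i)\<^sup>2 + (x$j)\<^sup>2 \<le> 1"
  proof -
    have "(x$1)\<^sup>2 + (x$2)\<^sup>2 \<le> 1" using B by (simp add: Bset_def norm2)
    then show ?thesis using i vec2_cases[of i] vec2_cases[of j] by (auto simp: add.commute)
  qed
  have sd: "0 < s * d" using s_pos d_pos by simp
  have "s*(1-d) \<le> 2 * s * (1+d)" using sd s_pos by (simp add: algebra_simps)
  then have xj: "\<bar>x$j\<bar> \<le> tt1 s d" using x2 by (simp add: tt1_def)
  have Aj: "AA s d (x$j) = 2 * s" using AA_props(3)[OF xj] .
  have Ai: "AA s d (x$i) = s" using AA_props(4) x1 hh_ge by simp
  have "1 + d \<le> \<bar>x$i / AA s d (x$j)\<bar>"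
  proof -
    have "(1 + d) * (2 * s) = tt1 s d" by (simp add: tt1_def)
    also have "\<dots> \<le> \<bar>x$i\<bar>" using tt1_le_hh x1 by simp
    finally show ?thesis using Aj s_pos by (simp add: abs_divide le_divide_eq)
  qed
  then have c1: "cc' d (x$i / AA s d (x$j)) = 0" by (rule cc_bounds(7)[OF d_pos d_le])
  have "\<bar>x$j / AA s d (x$i)\<bar> \<le> 1 - d" using x2 Ai s_pos by (simp add: abs_divide divide_le_eq mult.commute)
  then have c2: "cc' d (x$j / AA s d (x$i)) = 1" by (rule cc_bounds(6)[OF d_pos d_le])
  have "- divergence zfield x = cc' d (x$1 / AA s d (x$2)) / AA s d (x$2) + cc' d (x$2 / AA s d (x$1)) / AA s d (x$1)"
    by (rule div_in_B[OF B])
  also have "\<dots> = 1 / s"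
    using i vec2_cases[of i] vec2_cases[of j] c1 c2 Ai by auto
  finally show ?thesis .
qed

end


lemma U_sub_B: "Uset h \<subseteq> Bset" by (auto simp: Uset_def)

lemma B_borel: "Bset \<in> sets lborel" using compact_B by (simp add: borel_compact)
lemma U_borel: "Uset h \<in> sets lborel" using compact_U by (simp add: borel_compact)

lemma fin_sub_B: "A \<subseteq> Bset \<Longrightarrow> A \<in> sets lborel \<Longrightarrow> emeasure lebesgue A < \<infinity>"
proof -
  assume a: "A \<subseteq> Bset" "A \<in> sets lborel"
  have "emeasure lborel A \<le> emeasure lborel Bset" using a B_borel by (intro emeasure_mono) auto
  also have "\<dots> < \<infinity>" using compact_B by (rule emeasure_compact_finite)
  finally show ?thesis using a by (simp add: emeasure_completion)
qed

context params
begin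

lemma cap_pointwise:
  "(1/s) * (indicator (Bset - Uset hh) x - indicator Bad x) \<le> indicator (Bset - Uset hh) x * (- divergence zfield x)"
proof (cases "x \<in> Bset - Uset hh")
  case False
  then have "indicator (Bset - Uset hh) x = (0::real)" by simp
  then show ?thesis using s_pos by (cases "x \<in> Bad") simp_all
next
  case True
  then have B: "x \<in> Bset" and nU: "x \<notin> Uset hh" by auto
  have nd: "0 \<le> - divergence zfield x" using div_nonpos_B[OF B] .
  show ?thesis
  proof (cases "x \<in> Bad")
    case True
    then show ?thesis using \<open>x \<in> Bset - Uset hh\<close> nd by (simp add: indicator_def)
  next
    case False
    have k1: "\<bar>x$k\<bar> \<le> 1" for k using B component_le_norm_cart[of x k] by (auto simp: Bset_def)
    have n: "(x$1)\<^sup>2 + (x$2)\<^sup>2 \<le> 1" using B by (simp add: Bset_def norm2)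
    have "\<not> (\<forall>k. \<bar>x$k\<bar> \<le> hh)" using nU B by (auto simp: Uset_def)
    then have big: "hh < \<bar>x$1\<bar> \<or> hh < \<bar>x$2\<bar>" by (auto simp: forall_2)
    have other: "\<bar>x$j\<bar> < s" if "hh < \<bar>x$i\<bar>" "i \<noteq> j" for i j
    proof -
      have "(x$i)\<^sup>2 + (x$j)\<^sup>2 \<le> 1" using n that(2) vec2_cases[of i] vec2_cases[of j] by (auto simp: add.commute)
      moreover have "hh\<^sup>2 < (x$i)\<^sup>2" using that(1) hh_nonneg by (metis abs_le_square_iff not_le power2_abs abs_of_nonneg)
      ultimately have "(x$j)\<^sup>2 < s\<^sup>2" using hh_sq by simp
      then show ?thesis using s_pos by (metis abs_of_pos power2_abs power_less_imp_less_base abs_ge_zero less_imp_le)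
    qed
    have val: "- divergence zfield x = 1 / s"
    proof (cases "hh < \<bar>x$1\<bar>")
      case True
      have "\<bar>x$2\<bar> < s" using other[OF True, of 2] by simp
      moreover have "\<not> (s*(1-d) \<le> \<bar>x$2\<bar> \<and> \<bar>x$2\<bar> \<le> s)"
        using False k1[of 1] by (auto simp: Bad_def mem_cbox_vv abs_le_iff)
      ultimately have "\<bar>x$2\<bar> < s*(1-d)" by linarith
      then show ?thesis using cap_good[OF B _ True, of 2] by simp
    next
      case False2: False
      then have T: "hh < \<bar>x$2\<bar>" using big by simp
      have "\<bar>x$1\<bar> < s" using other[OF T, of 1] by simp
      moreover have "\<not> (s*(1-d) \<le> \<bar>x$1\<bar> \<and> \<bar>x$1\<bar> \<le> s)"
        using False k1[of 2] by (auto simp: Bad_def mem_cbox_vv abs_le_iff)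
      ultimately have "\<bar>x$1\<bar> < s*(1-d)" by linarith
      then show ?thesis using cap_good[OF B _ T, of 1] by simp
    qed
    show ?thesis using \<open>x \<in> Bset - Uset hh\<close> False val by (simp add: indicator_def)
  qed
qed

lemma div_cont: "continuous_on UNIV (divergence zfield)" by (rule zfield_div_cont)

lemma int_BU: "integrable lebesgue (\<lambda>x. indicator (Bset - Uset hh) x * divergence zfield x)"
proof -
  have "integrable lebesgue (\<lambda>x. indicator Bset x * divergence zfield x - indicator (Uset hh) x * divergence zfield x)"
    by (intro Bochner_Integration.integrable_diff int_compact_lebesgue compact_B compact_U div_cont)
  moreover have "(\<lambda>x. indicator Bset x * divergence zfield x - indicator (Uset hh) x * divergence zfield x)
      = (\<lambda>x. indicator (Bset - Uset hh) x * divergence zfield x)"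
    using U_sub_B[of hh] by (auto simp: indicator_def fun_eq_iff)
  ultimately show ?thesis by simp
qed

lemma caps_lower:
  "measure lebesgue (Bset - Uset hh) / s - 8 * d \<le> - (\<integral>x. indicator (Bset - Uset hh) x * divergence zfield x \<partial>lebesgue)"
proof -
  have sBU: "Bset - Uset hh \<in> sets lebesgue" using B_borel U_borel by auto
  have fBU: "emeasure lebesgue (Bset - Uset hh) < \<infinity>" using B_borel U_borel by (intro fin_sub_B) auto
  have sBad: "Bad \<in> sets lebesgue" using Bad_sets by simp
  have "compact Bad" unfolding Bad_def by (intro compact_Un compact_cbox)
  then have fBad: "emeasure lebesgue Bad < \<infinity>" using Bad_sets emeasure_compact_finite[of Bad] by (simp add: emeasure_completion)
  have "(\<integral>x. (1/s) * (indicator (Bset - Uset hh) x - indicator Bad x) \<partial>lebesgue)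
      \<le> (\<integral>x. indicator (Bset - Uset hh) x * (- divergence zfield x) \<partial>lebesgue)"
  proof (rule integral_mono)
    show "integrable lebesgue (\<lambda>x. (1/s) * (indicator (Bset - Uset hh) x - indicator Bad x))"
      using sBU fBU sBad fBad by (intro integrable_mult_right Bochner_Integration.integrable_diff integrable_real_indicator)
    show "integrable lebesgue (\<lambda>x. indicator (Bset - Uset hh) x * (- divergence zfield x))"
      using integrable_minus[OF int_BU] by simp
  qed (rule cap_pointwise)
  also have "\<dots> = - (\<integral>x. indicator (Bset - Uset hh) x * divergence zfield x \<partial>lebesgue)"
    by (subst integral_minus[symmetric]) simp
  finally have 1: "(\<integral>x. (1/s) * (indicator (Bset - Uset hh) x - indicator Bad x) \<partial>lebesgue)
      \<le> - (\<integral>x. indicator (Bset - Uset hh) x * divergence zfield x \<partial>lebesgue)" .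
  have "(\<integral>x. (1/s) * (indicator (Bset - Uset hh) x - indicator Bad x) \<partial>lebesgue)
      = (1/s) * (measure lebesgue (Bset - Uset hh) - measure lebesgue Bad)"
    using sBU fBU sBad fBad by (simp add: Bochner_Integration.integral_diff)
  also have "measure lebesgue Bad = measure lborel Bad" using Bad_sets by simp
  finally have 2: "(\<integral>x. (1/s) * (indicator (Bset - Uset hh) x - indicator Bad x) \<partial>lebesgue)
      = (1/s) * (measure lebesgue (Bset - Uset hh) - measure lborel Bad)" .
  have "(1/s) * measure lborel Bad \<le> (1/s) * (8 * s * d)" using Bad_measure s_pos by (intro mult_left_mono) auto
  also have "\<dots> = 8 * d" using s_pos by simp
  finally have 3: "(1/s) * measure lborel Bad \<le> 8 * d" .
  show ?thesis using 1 2 3 by (simp add: right_diff_distrib)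
qed

end


context params
begin

lemma zfield_adm: "zfield \<in> {\<phi>. C1c_field \<phi> \<and> (\<forall>x i. \<bar>\<phi> x $ i\<bar> \<le> 1)}"
  using zfield_C1c zfield_bound by auto

lemma energy_lower:
  fixes v :: "real^2 \<Rightarrow> real"
  assumes v: "integrable lebesgue v"
  shows "ereal (8 * hh' + measure lebesgue (Bset - Uset hh) / s - 8 * d)
     \<le> TV1 v + ereal ((1/s) * (\<integral>x. \<bar>v x - indicator Bset x\<bar> \<partial>lebesgue))"
proof -
  let ?g = "divergence zfield"
  let ?f = "indicator Bset :: real^2 \<Rightarrow> real"
  have tv: "ereal (- (\<integral>x. v x * ?g x \<partial>lebesgue)) \<le> TV1 v"
    unfolding TV1_def by (rule SUP_upper[OF zfield_adm])
  have gm: "?g \<in> borel_measurable lebesgue"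
  proof -
    have "?g \<in> borel_measurable lborel" using div_cont by (simp add: borel_measurable_continuous_onI)
    then show ?thesis by (rule measurable_completion)
  qed
  have iv: "integrable lebesgue (\<lambda>x. v x * ?g x)"
  proof (rule Bochner_Integration.integrable_bound)
    show "integrable lebesgue (\<lambda>x. (1/s) * v x)" using v by simp
    show "(\<lambda>x. v x * ?g x) \<in> borel_measurable lebesgue" using v gm by measurable
    show "AE x in lebesgue. norm (v x * ?g x) \<le> norm ((1/s) * v x)"
    proof (rule AE_I2)
      fix x
      have "\<bar>v x\<bar> * \<bar>?g x\<bar> \<le> \<bar>v x\<bar> * (1/s)" by (rule mult_left_mono[OF div_bound]) simp
      then show "norm (v x * ?g x) \<le> norm ((1/s) * v x)" using s_pos by (simp add: abs_mult mult.commute)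
    qed
  qed
  have if_: "integrable lebesgue ?f" using B_borel compact_B emeasure_compact_finite[of Bset]
    by (intro integrable_real_indicator) (auto simp: emeasure_completion)
  have ia: "integrable lebesgue (\<lambda>x. \<bar>v x - ?f x\<bar>)" using v if_ by auto
  have ifg: "integrable lebesgue (\<lambda>x. ?f x * ?g x)" by (rule int_compact_lebesgue[OF compact_B div_cont])
  have "- (\<integral>x. ?f x * ?g x \<partial>lebesgue) = (\<integral>x. - (?f x * ?g x) \<partial>lebesgue)" by simp
  also have "\<dots> \<le> (\<integral>x. - (v x * ?g x) + (1/s) * \<bar>v x - ?f x\<bar> \<partial>lebesgue)"
  proof (rule integral_mono)
    show "integrable lebesgue (\<lambda>x. - (?f x * ?g x))" using ifg by simp
    show "integrable lebesgue (\<lambda>x. - (v x * ?g x) + (1/s) * \<bar>v x - ?f x\<bar>)" using iv ia by simp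
    fix x
    have "?g x * (v x - ?f x) \<le> \<bar>?g x * (v x - ?f x)\<bar>" by simp
    also have "\<dots> = \<bar>?g x\<bar> * \<bar>v x - ?f x\<bar>" by (simp add: abs_mult)
    also have "\<dots> \<le> (1/s) * \<bar>v x - ?f x\<bar>" using div_bound[of x] by (intro mult_right_mono) auto
    finally show "- (?f x * ?g x) \<le> - (v x * ?g x) + (1/s) * \<bar>v x - ?f x\<bar>" by (simp add: algebra_simps)
  qed
  also have "\<dots> = - (\<integral>x. v x * ?g x \<partial>lebesgue) + (1/s) * (\<integral>x. \<bar>v x - ?f x\<bar> \<partial>lebesgue)"
    using iv ia by simp
  finally have 1: "- (\<integral>x. ?f x * ?g x \<partial>lebesgue) \<le> - (\<integral>x. v x * ?g x \<partial>lebesgue) + (1/s) * (\<integral>x. \<bar>v x - ?f x\<bar> \<partial>lebesgue)" .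
  have "(\<integral>x. ?f x * ?g x \<partial>lebesgue) = (\<integral>x. indicator (Uset hh) x * ?g x + indicator (Bset - Uset hh) x * ?g x \<partial>lebesgue)"
    using U_sub_B[of hh] by (intro Bochner_Integration.integral_cong) (auto simp: indicator_def)
  also have "\<dots> = (\<integral>x. indicator (Uset hh) x * ?g x \<partial>lebesgue) + (\<integral>x. indicator (Bset - Uset hh) x * ?g x \<partial>lebesgue)"
    by (intro Bochner_Integration.integral_add int_compact_lebesgue compact_U div_cont int_BU)
  finally have 2: "8 * hh' + measure lebesgue (Bset - Uset hh) / s - 8 * d \<le> - (\<integral>x. ?f x * ?g x \<partial>lebesgue)"
    using U_lower caps_lower by simp
  have "ereal (8 * hh' + measure lebesgue (Bset - Uset hh) / s - 8 * d)
      \<le> ereal (- (\<integral>x. v x * ?g x \<partial>lebesgue)) + ereal ((1/s) * (\<integral>x. \<bar>v x - ?f x\<bar> \<partial>lebesgue))"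
    using 1 2 by simp
  also have "\<dots> \<le> TV1 v + ereal ((1/s) * (\<integral>x. \<bar>v x - ?f x\<bar> \<partial>lebesgue))"
    using tv by (rule add_right_mono)
  finally show ?thesis .
qed

lemma hh_diff: "hh - hh' \<le> d"
proof -
  have "s\<^sup>2 \<le> (1/2)\<^sup>2" using s_le s_pos by (intro power_mono) auto
  then have s2: "s\<^sup>2 \<le> 1/4" by (simp add: power2_eq_square)
  have "hh\<^sup>2 - hh'\<^sup>2 = ((1+d)\<^sup>2 - 1) * s\<^sup>2"
    unfolding hh_def hh'_def using s2_small s_le s_pos hh_sq by (simp add: algebra_simps hh_def)
  also have "\<dots> = (2*d + d\<^sup>2) * s\<^sup>2" by (simp add: power2_eq_square algebra_simps)
  also have "\<dots> \<le> (3*d) * (1/4)"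
  proof (rule mult_mono)
    show "2*d + d\<^sup>2 \<le> 3*d" using d_pos d_le by (simp add: power2_eq_square)
  qed (use s2 d_pos in auto)
  finally have a: "hh\<^sup>2 - hh'\<^sup>2 \<le> 3 * d / 4" by simp
  have "1/2 \<le> sqrt (1/2::real)" by (rule real_le_rsqrt) (simp add: power2_eq_square)
  then have b: "1 \<le> hh + hh'" using hh_ge by linarith
  have "hh\<^sup>2 - hh'\<^sup>2 = (hh - hh') * (hh + hh')" by (simp add: power2_eq_square algebra_simps)
  then have "(hh - hh') * (hh + hh') \<le> 3 * d / 4" using a by simp
  moreover have "0 \<le> hh - hh'" using hh_ge by simp
  ultimately have "(hh - hh') * 1 \<le> 3 * d / 4" using mult_left_mono[OF b, of "hh - hh'"] by linarith
  then show ?thesis using d_pos by simp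
qed

end


lemma params_intro:
  assumes "0 < s" "8 * s\<^sup>2 < 1" "0 < d" "d \<le> 1/2" "d \<le> (1 - 8 * s\<^sup>2)/3"
  shows "params s d"
proof
  show "0 < s" "0 < d" "d \<le> 1/2" using assms by auto
  let ?r = "8 * s\<^sup>2"
  have "(1+d)\<^sup>2 = 1 + 2*d + d*d" by (simp add: power2_eq_square algebra_simps)
  also have "\<dots> \<le> 1 + 3*d" using assms(3,4) by (simp add: mult_left_le_one_le)
  also have "\<dots> \<le> 2 - ?r" using assms(5) by simp
  finally have a: "(1+d)\<^sup>2 \<le> 2 - ?r" .
  have "?r * (1+d)\<^sup>2 \<le> ?r * (2 - ?r)" using a by (intro mult_left_mono) auto
  also have "\<dots> = 1 - (1 - ?r)\<^sup>2" by (simp add: power2_eq_square algebra_simps)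
  also have "\<dots> < 1" using assms(2) by simp
  finally show "8 * s\<^sup>2 * (1 + d)\<^sup>2 < 1" .
qed

lemma TV_U_le: "0 \<le> h \<Longrightarrow> h \<le> 1 \<Longrightarrow> TV1 (indicator (Uset h)) \<le> ereal (8 * h)"
  unfolding TV1_def by (rule SUP_least) (use TV_U_test in auto)

lemma ind_diff: "(\<integral>x. \<bar>indicator (Uset h) x - indicator Bset x\<bar> \<partial>lebesgue) = measure lebesgue (Bset - Uset h)"
proof -
  have "(\<lambda>x. \<bar>indicator (Uset h) x - indicator Bset x\<bar>) = (indicator (Bset - Uset h) :: real^2 \<Rightarrow> real)"
    using U_sub_B[of h] by (auto simp: indicator_def fun_eq_iff)
  then show ?thesis by simp
qed

theorem mainTheorem16:
  fixes lam s h :: real and B U :: "(real^2) set"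
  assumes "lam > 2 * sqrt 2"
  defines "s \<equiv> 1 / lam"
  defines "h \<equiv> sqrt (1 - s\<^sup>2)"
  defines "B \<equiv> {x :: real^2. norm x \<le> 1}"
  defines "U \<equiv> B \<inter> {x :: real^2. \<forall>i. \<bar>x $ i\<bar> \<le> h}"
  shows "BV (indicator U) \<and>
         (\<forall>v. BV v \<longrightarrow> energy (indicator U) (indicator B) lam \<le> energy v (indicator B) lam)"
proof -
  have lam_pos: "0 < lam" using assms(1) by (smt (verit) real_sqrt_ge_zero)
  have "(2 * sqrt 2)\<^sup>2 < lam\<^sup>2" using assms(1) by (intro power_strict_mono) auto
  then have lam2: "8 < lam\<^sup>2" by (simp add: power_mult_distrib)
  have s_pos: "0 < s" using lam_pos by (simp add: s_def)
  have s2: "8 * s\<^sup>2 < 1" using lam2 lam_pos by (simp add: s_def power_divide field_simps)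
  have lam_s: "lam = 1 / s" by (simp add: s_def)
  have BB: "B = Bset" by (simp add: B_def Bset_def)
  have UU: "U = Uset h" by (simp add: U_def Uset_def BB)
  have s_le1: "s\<^sup>2 \<le> 1" using s2 by simp
  have h01: "0 \<le> h" "h \<le> 1" using s_le1 by (auto simp: h_def)
  define m where "m = measure lebesgue (Bset - Uset h)"
  have Eu: "energy (indicator U) (indicator B) lam \<le> ereal (8 * h + lam * m)"
  proof -
    have "energy (indicator U) (indicator B) lam = TV1 (indicator (Uset h)) + ereal (lam * m)"
      unfolding energy_def UU BB ind_diff m_def ..
    also have "\<dots> \<le> ereal (8 * h) + ereal (lam * m)"
      using TV_U_le[OF h01] by (rule add_right_mono)
    finally show ?thesis by simp
  qed
  have BVu: "BV (indicator U)"
  proof -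
    have "integrable lebesgue (indicator (Uset h) :: real^2 \<Rightarrow> real)"
      using U_borel fin_sub_B[OF U_sub_B U_borel] by (intro integrable_real_indicator) auto
    moreover have "TV1 (indicator (Uset h)) < \<infinity>" by (rule le_less_trans[OF TV_U_le[OF h01]]) simp
    ultimately show ?thesis by (simp add: BV_def UU)
  qed
  define d0 where "d0 = min (1/2) ((1 - 8 * s\<^sup>2)/3)"
  have d0_pos: "0 < d0" using s2 by (simp add: d0_def)
  have main: "energy (indicator U) (indicator B) lam \<le> energy v (indicator B) lam" if bv: "BV v" for v
  proof -
    have vi: "integrable lebesgue v" and tvf: "TV1 v < \<infinity>" using bv by (auto simp: BV_def)
    define a where "a = (\<integral>x. \<bar>v x - indicator Bset x\<bar> \<partial>lebesgue)"
    have low: "ereal (8 * h + lam * m - 16 * d) \<le> TV1 v + ereal (lam * a)" if d: "0 < d" "d \<le> d0" for d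
    proof -
      interpret p: params s d
        using d s_pos s2 by (intro params_intro) (auto simp: d0_def)
      have hh: "p.hh = h" by (simp add: p.hh_def h_def)
      have "ereal (8 * h + lam * m - 16 * d) \<le> ereal (8 * p.hh' + measure lebesgue (Bset - Uset p.hh) / s - 8 * d)"
        using p.hh_diff unfolding hh m_def lam_s by simp
      also have "\<dots> \<le> TV1 v + ereal ((1/s) * a)" unfolding a_def by (rule p.energy_lower[OF vi])
      finally show ?thesis by (simp add: lam_s)
    qed
    have "TV1 v \<noteq> - \<infinity>"
    proof
      assume "TV1 v = - \<infinity>"
      then show False using low[OF d0_pos order.refl] by simp
    qed
    then obtain t where t: "TV1 v = ereal t" using tvf by (cases "TV1 v") auto
    have "8 * h + lam * m \<le> t + lam * a"
    proof (rule field_le_epsilon)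
      fix e :: real assume e: "0 < e"
      define d where "d = min d0 (e / 16)"
      have d: "0 < d" "d \<le> d0" "16 * d \<le> e" using d0_pos e by (auto simp: d_def)
      have "8 * h + lam * m - 16 * d \<le> t + lam * a" using low[OF d(1,2)] t by simp
      then show "8 * h + lam * m \<le> t + lam * a + e" using d(3) by simp
    qed
    then have "ereal (8 * h + lam * m) \<le> energy v (indicator B) lam"
      by (simp add: energy_def t BB a_def)
    then show ?thesis using Eu by simp
  qed
  show ?thesis using BVu main by blast
qed


end
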